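(* Let $n\ge2$, let $S\subseteq\mathbb{R}^n$ be a star-shaped body with kernel $K_S$, and let $v\in\mathbb{R}^n$ with $\|v\|=1$. Define $f_S(t)=\mathrm{vol}_{n-1}(\{x: v^Tx=t\}\cap S)$ and $f_K(t)=\mathrm{vol}_{n-1}(\{x:v^Tx=t\}\cap K_S)$. Then for $x\in\mathrm{supp}(f_K)$, $y\in\mathrm{supp}(f_S)$ and $\alpha\in[0,1]$, \[ f_S(\alpha x+(1-\alpha)y)^{\frac1{n-1}}\ge\alpha f_K(x)^{\frac1{n-1}}+(1-\alpha)f_S(y)^{\frac1{n-1}}. \] Furthermore, for all $x,y\in\mathbb{R}$ and $\alpha\in[0,1]$, $f_S(\alpha x+(1-\alpha)y)\ge f_K(x)^\alpha f_S(y)^{1-\alpha}$.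
   Context: A star-shaped body is a compact body (compact, nonempty interior, equal to the closure of its interior) whose kernel $K_S=\{x\in S:[x,y]\subseteq S\ \forall y\in S\}$ is nonempty. *)

theory Defs
  imports "HOL-Analysis.Analysis"
begin

definition kernel :: "'a::real_vector set \<Rightarrow> 'a set" where
  "kernel S = {x \<in> S. \<forall>y \<in> S. closed_segment x y \<subseteq> S}"

definition compact_body :: "'a::euclidean_space set \<Rightarrow> bool" where
  "compact_body S \<longleftrightarrow> compact S \<and> interior S \<noteq> {} \<and> S = closure (interior S)"

definition star_body :: "'a::euclidean_space set \<Rightarrow> bool" where
  "star_body S \<longleftrightarrow> compact_body S \<and> kernel S \<noteq> {}"

text \<open>(n-1)-dimensional volume of a set A contained in a hyperplane orthogonal to
  the unit vector v: the n-dimensional Lebesgue measure of the right prism of height 1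
  over A in direction v (Cavalieri).\<close>
definition hvol :: "'a::euclidean_space \<Rightarrow> 'a set \<Rightarrow> real" where
  "hvol v A = measure lebesgue ((\<lambda>(a, s). a + s *\<^sub>R v) ` (A \<times> {0..1}))"

definition section_fun :: "'a::euclidean_space \<Rightarrow> 'a set \<Rightarrow> real \<Rightarrow> real" where
  "section_fun v A t = hvol v ({x. v \<bullet> x = t} \<inter> A)"

definition supp :: "(real \<Rightarrow> real) \<Rightarrow> real set" where
  "supp f = closure {t. f t \<noteq> 0}"

definition mpow :: "real \<Rightarrow> real \<Rightarrow> real" where
  "mpow x a = (if a = 0 then 1 else x powr a)"

end

theory Submission
  imports Defs
begin

definition msum :: "real \<Rightarrow> 'a::real_vector set \<Rightarrow> 'a set \<Rightarrow> 'a set" where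
  "msum l A B = (\<lambda>p. l *\<^sub>R fst p + (1-l) *\<^sub>R snd p) ` (A \<times> B)"

lemma msum_iff: "x \<in> msum l A B \<longleftrightarrow> (\<exists>a\<in>A. \<exists>b\<in>B. x = l *\<^sub>R a + (1-l) *\<^sub>R b)"
  unfolding msum_def by force

lemma msum_mono: "A \<subseteq> A' \<Longrightarrow> B \<subseteq> B' \<Longrightarrow> msum l A B \<subseteq> msum l A' B'"
  unfolding msum_def by auto

lemma msum_swap: "msum l A B = msum (1-l) B A"
  unfolding msum_iff set_eq_iff by (auto simp: add.commute)

lemma compact_msum:
  fixes A B :: "'a::real_normed_vector set"
  assumes "compact A" "compact B" shows "compact (msum l A B)"
  unfolding msum_def
  by (intro compact_continuous_image continuous_intros compact_Times assms)

lemma measure_cbox_eq: "measure lebesgue (cbox a b) = measure lborel (cbox a b)"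
  by (simp add: measure_completion)

lemma measure_cbox_prod: "\<forall>i\<in>Basis. a\<bullet>i \<le> b\<bullet>i \<Longrightarrow> measure lebesgue (cbox a b) = (\<Prod>i\<in>Basis. b\<bullet>i - a\<bullet>i)"
  by (simp add: measure_cbox_eq measure_lborel_cbox inner_diff_left)

lemma box_bm:
  fixes a b c d :: "'a::euclidean_space"
  assumes ab: "\<forall>i\<in>Basis. a\<bullet>i \<le> b\<bullet>i" and cd: "\<forall>i\<in>Basis. c\<bullet>i \<le> d\<bullet>i"
    and l: "0 < l" "l < 1"
  shows "measure lebesgue (msum l (cbox a b) (cbox c d))
     \<ge> measure lebesgue (cbox a b) powr l * measure lebesgue (cbox c d) powr (1-l)"
proof -
  define e where "e = l *\<^sub>R a + (1-l) *\<^sub>R c"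
  define f where "f = l *\<^sub>R b + (1-l) *\<^sub>R d"
  have ef: "f\<bullet>i - e\<bullet>i = l * (b\<bullet>i - a\<bullet>i) + (1-l) * (d\<bullet>i - c\<bullet>i)" for i
    by (simp add: e_def f_def inner_simps algebra_simps)
  have ef0: "\<forall>i\<in>Basis. e\<bullet>i \<le> f\<bullet>i"
    using ab cd l ef by (smt (verit, best) mult_nonneg_nonneg)
  have sub: "cbox e f \<subseteq> msum l (cbox a b) (cbox c d)"
  proof
    fix x assume x: "x \<in> cbox e f"
    define t :: "'a \<Rightarrow> real" where "t i = (if f\<bullet>i - e\<bullet>i = 0 then 0 else (x\<bullet>i - e\<bullet>i) / (f\<bullet>i - e\<bullet>i))" for i
    have t01: "0 \<le> t i \<and> t i \<le> 1" if "i \<in> Basis" for i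
      using x that ef0 by (auto simp: t_def mem_box divide_simps)
    have xt: "x\<bullet>i = e\<bullet>i + t i * (f\<bullet>i - e\<bullet>i)" if "i \<in> Basis" for i
      using x that ef0 by (auto simp: t_def mem_box divide_simps)
    define p where "p = (\<Sum>i\<in>Basis. (a\<bullet>i + t i * (b\<bullet>i - a\<bullet>i)) *\<^sub>R i)"
    define q where "q = (\<Sum>i\<in>Basis. (c\<bullet>i + t i * (d\<bullet>i - c\<bullet>i)) *\<^sub>R i)"
    have pi: "p\<bullet>i = a\<bullet>i + t i * (b\<bullet>i - a\<bullet>i)" if "i \<in> Basis" for i
      using that by (simp add: p_def inner_sum_left inner_Basis if_distrib cong: if_cong)
    have qi: "q\<bullet>i = c\<bullet>i + t i * (d\<bullet>i - c\<bullet>i)" if "i \<in> Basis" for i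
      using that by (simp add: q_def inner_sum_left inner_Basis if_distrib cong: if_cong)
    have "p \<in> cbox a b"
      unfolding mem_box
    proof
      fix i :: 'a assume i: "i \<in> Basis"
      have "0 \<le> t i * (b\<bullet>i - a\<bullet>i)" using t01[OF i] ab i by simp
      moreover have "t i * (b\<bullet>i - a\<bullet>i) \<le> 1 * (b\<bullet>i - a\<bullet>i)"
        using t01[OF i] ab i by (intro mult_right_mono) auto
      ultimately show "a\<bullet>i \<le> p\<bullet>i \<and> p\<bullet>i \<le> b\<bullet>i" using pi[OF i] by simp
    qed
    moreover have "q \<in> cbox c d"
      unfolding mem_box
    proof
      fix i :: 'a assume i: "i \<in> Basis"
      have "0 \<le> t i * (d\<bullet>i - c\<bullet>i)" using t01[OF i] cd i by simp
      moreover have "t i * (d\<bullet>i - c\<bullet>i) \<le> 1 * (d\<bullet>i - c\<bullet>i)"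
        using t01[OF i] cd i by (intro mult_right_mono) auto
      ultimately show "c\<bullet>i \<le> q\<bullet>i \<and> q\<bullet>i \<le> d\<bullet>i" using qi[OF i] by simp
    qed
    moreover have "x = l *\<^sub>R p + (1-l) *\<^sub>R q"
    proof (rule euclidean_eqI)
      fix i :: 'a assume i: "i \<in> Basis"
      show "x\<bullet>i = (l *\<^sub>R p + (1-l) *\<^sub>R q)\<bullet>i"
      proof -
        have ei: "e\<bullet>i = l*(a\<bullet>i)+(1-l)*(c\<bullet>i)" by (simp add: e_def inner_simps)
        have xt': "x\<bullet>i = l*(a\<bullet>i)+(1-l)*(c\<bullet>i) + t i*(l*(b\<bullet>i-a\<bullet>i)+(1-l)*(d\<bullet>i-c\<bullet>i))"
          using xt[OF i] ef[of i] ei by simp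
        have "(l *\<^sub>R p + (1-l) *\<^sub>R q)\<bullet>i = l*(p\<bullet>i)+(1-l)*(q\<bullet>i)" by (simp add: inner_simps)
        also have "\<dots> = x\<bullet>i" unfolding xt' pi[OF i] qi[OF i] by (simp add: algebra_simps)
        finally show ?thesis by simp
      qed
    qed
    ultimately show "x \<in> msum l (cbox a b) (cbox c d)"
      unfolding msum_iff by blast
  qed
  have "measure lebesgue (cbox e f) \<le> measure lebesgue (msum l (cbox a b) (cbox c d))"
    by (intro measure_mono_fmeasurable sub lmeasurable_cbox[THEN fmeasurableD]
        lmeasurable_compact compact_msum compact_cbox)
  moreover have "measure lebesgue (cbox e f) = (\<Prod>i\<in>Basis. l * (b\<bullet>i - a\<bullet>i) + (1-l) * (d\<bullet>i - c\<bullet>i))"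
    by (subst measure_cbox_prod[OF ef0], rule prod.cong, auto simp: ef)
  moreover have "(\<Prod>i\<in>Basis. l * (b\<bullet>i - a\<bullet>i) + (1-l) * (d\<bullet>i - c\<bullet>i))
      \<ge> (\<Prod>i\<in>Basis. (b\<bullet>i - a\<bullet>i) powr l * (d\<bullet>i - c\<bullet>i) powr (1-l))"
  proof (rule prod_mono)
    fix i :: 'a assume i: "i \<in> Basis"
    show "0 \<le> (b\<bullet>i - a\<bullet>i) powr l * (d\<bullet>i - c\<bullet>i) powr (1-l) \<and>
      (b\<bullet>i - a\<bullet>i) powr l * (d\<bullet>i - c\<bullet>i) powr (1-l) \<le> l * (b\<bullet>i - a\<bullet>i) + (1-l) * (d\<bullet>i - c\<bullet>i)"
    proof (cases "b\<bullet>i - a\<bullet>i = 0 \<or> d\<bullet>i - c\<bullet>i = 0")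
      case True
      then show ?thesis using ab cd i l by auto
    next
      case False
      then show ?thesis using ab cd i l Youngs_inequality_0[of l "1-l" "b\<bullet>i - a\<bullet>i" "d\<bullet>i - c\<bullet>i"]
        by force
    qed
  qed
  moreover have "(\<Prod>i\<in>Basis. (b\<bullet>i - a\<bullet>i) powr l * (d\<bullet>i - c\<bullet>i) powr (1-l))
     = measure lebesgue (cbox a b) powr l * measure lebesgue (cbox c d) powr (1-l)"
    by (subst measure_cbox_prod[OF ab], subst measure_cbox_prod[OF cd]) (simp add: prod_powr_distrib prod.distrib)
  ultimately show ?thesis by linarith
qed

lemma hyperplane_negl: "k \<in> (Basis::'a::euclidean_space set) \<Longrightarrow> negligible {x::'a. x\<bullet>k = c}"
  using negligible_hyperplane[of k c] by (simp add: inner_commute nonzero_Basis)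

lemma squeeze_measure:
  assumes "X \<subseteq> Y" "Y - X \<subseteq> N" "negligible N" "Y \<in> lmeasurable"
  shows "measure lebesgue X = measure lebesgue Y"
proof -
  have "negligible (Y - X \<union> (X - Y))"
    by (rule negligible_subset[OF assms(3)]) (use assms in auto)
  then show ?thesis by (rule measure_negligible_symdiff[OF assms(4)])
qed

lemma split_measure:
  fixes S :: "'a::euclidean_space set"
  assumes S: "compact S" and k: "k \<in> Basis"
  shows "measure lebesgue S = measure lebesgue (S \<inter> {x. x\<bullet>k \<le> c}) + measure lebesgue (S \<inter> {x. x\<bullet>k \<ge> c})"
proof -
  have c1: "compact (S \<inter> {x. x\<bullet>k \<le> c})" "compact (S \<inter> {x. x\<bullet>k \<ge> c})"
    using S by (auto intro!: compact_Int_closed closed_halfspace_component_le closed_halfspace_component_ge)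
  have U: "(S \<inter> {x. x\<bullet>k \<le> c}) \<union> (S \<inter> {x. x\<bullet>k \<ge> c}) = S" by auto
  have "measure lebesgue ((S \<inter> {x. x\<bullet>k \<le> c}) \<union> (S \<inter> {x. x\<bullet>k \<ge> c})) = measure lebesgue (S \<inter> {x. x\<bullet>k \<le> c}) + measure lebesgue (S \<inter> {x. x\<bullet>k \<ge> c})
     - measure lebesgue ((S \<inter> {x. x\<bullet>k \<le> c}) \<inter> (S \<inter> {x. x\<bullet>k \<ge> c}))"
    by (rule measure_Un3; rule lmeasurable_compact; rule c1)
  then have "measure lebesgue S = measure lebesgue (S \<inter> {x. x\<bullet>k \<le> c}) + measure lebesgue (S \<inter> {x. x\<bullet>k \<ge> c})
     - measure lebesgue ((S \<inter> {x. x\<bullet>k \<le> c}) \<inter> (S \<inter> {x. x\<bullet>k \<ge> c}))"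
    by (simp only: U)
  moreover have "measure lebesgue ((S \<inter> {x. x\<bullet>k \<le> c}) \<inter> (S \<inter> {x. x\<bullet>k \<ge> c})) = 0"
    by (rule negligible_imp_measure0, rule negligible_subset[OF hyperplane_negl[OF k, of c]]) auto
  ultimately show ?thesis by linarith
qed

lemma split_sub_measure:
  fixes S :: "'a::euclidean_space set"
  assumes S: "compact S" and k: "k \<in> Basis"
    and M1: "M1 \<subseteq> S \<inter> {x. x\<bullet>k \<le> c}" "compact M1"
    and M2: "M2 \<subseteq> S \<inter> {x. x\<bullet>k \<ge> c}" "compact M2"
  shows "measure lebesgue S \<ge> measure lebesgue M1 + measure lebesgue M2"
proof -
  have c1: "compact (S \<inter> {x. x\<bullet>k \<le> c})" "compact (S \<inter> {x. x\<bullet>k \<ge> c})"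
    using S by (auto intro!: compact_Int_closed closed_halfspace_component_le closed_halfspace_component_ge)
  have "measure lebesgue M1 \<le> measure lebesgue (S \<inter> {x. x\<bullet>k \<le> c})"
    by (intro measure_mono_fmeasurable M1 lmeasurable_compact c1 fmeasurableD)
  moreover have "measure lebesgue M2 \<le> measure lebesgue (S \<inter> {x. x\<bullet>k \<ge> c})"
    by (intro measure_mono_fmeasurable M2 lmeasurable_compact c1 fmeasurableD)
  ultimately show ?thesis using split_measure[OF S k, of c] by linarith
qed

lemma slice_lipschitz:
  fixes S :: "'a::euclidean_space set"
  assumes S: "compact S" and k: "k \<in> Basis"
  obtains L where "0 \<le> L" "\<And>c c'. c \<le> c' \<Longrightarrow>
     measure lebesgue (S \<inter> {x. x\<bullet>k \<le> c'}) \<le> measure lebesgue (S \<inter> {x. x\<bullet>k \<le> c}) + L * (c' - c)"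
proof -
  obtain r where r: "\<forall>x\<in>S. norm x \<le> r" "0 \<le> r"
    using compact_imp_bounded[OF S] unfolding bounded_pos by (auto simp: less_imp_le)
  define L where "L = (2*r) ^ (DIM('a) - 1)"
  show ?thesis
  proof (rule that)
    show "0 \<le> L" using r by (simp add: L_def)
    fix c c' :: real assume cc: "c \<le> c'"
    define lo where "lo = -r *\<^sub>R One + (c + r) *\<^sub>R k"
    define hi where "hi = r *\<^sub>R One + (c' - r) *\<^sub>R k"
    have loj: "lo\<bullet>j = (if j = k then c else -r)" if "j \<in> Basis" for j
      using that k by (auto simp: lo_def inner_simps inner_Basis)
    have hij: "hi\<bullet>j = (if j = k then c' else r)" if "j \<in> Basis" for j
      using that k by (auto simp: hi_def inner_simps inner_Basis)
    have lohi: "\<forall>j\<in>Basis. lo\<bullet>j \<le> hi\<bullet>j" using loj hij cc r by auto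
    have slab: "S \<inter> {x. x\<bullet>k \<le> c'} \<subseteq> (S \<inter> {x. x\<bullet>k \<le> c}) \<union> cbox lo hi"
    proof
      fix x assume x: "x \<in> S \<inter> {x. x\<bullet>k \<le> c'}"
      show "x \<in> (S \<inter> {x. x\<bullet>k \<le> c}) \<union> cbox lo hi"
      proof (cases "x\<bullet>k \<le> c")
        case False
        have "\<bar>x\<bullet>j\<bar> \<le> r" if "j \<in> Basis" for j
          using x r Basis_le_norm[OF that, of x] by auto
        then have "x \<in> cbox lo hi" using False x unfolding mem_box
          by (auto simp: loj hij abs_le_iff) (smt (verit))
        then show ?thesis by simp
      qed (use x in auto)
    qed
    have cs: "compact (S \<inter> {x. x\<bullet>k \<le> c})"
      using S by (auto intro!: compact_Int_closed closed_halfspace_component_le)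
    have cs': "compact (S \<inter> {x. x\<bullet>k \<le> c'})"
      using S by (auto intro!: compact_Int_closed closed_halfspace_component_le)
    have "measure lebesgue (S \<inter> {x. x\<bullet>k \<le> c'}) \<le> measure lebesgue ((S \<inter> {x. x\<bullet>k \<le> c}) \<union> cbox lo hi)"
      by (intro measure_mono_fmeasurable slab fmeasurableD lmeasurable_compact cs' fmeasurable.Un cs lmeasurable_cbox)
    also have "\<dots> \<le> measure lebesgue (S \<inter> {x. x\<bullet>k \<le> c}) + measure lebesgue (cbox lo hi)"
      by (intro measure_Un_le fmeasurableD lmeasurable_compact cs lmeasurable_cbox)
    also have "measure lebesgue (cbox lo hi) = L * (c' - c)"
    proof -
      have "measure lebesgue (cbox lo hi) = (\<Prod>j\<in>Basis. hi\<bullet>j - lo\<bullet>j)"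
        by (rule measure_cbox_prod[OF lohi])
      also have "\<dots> = (hi\<bullet>k - lo\<bullet>k) * (\<Prod>j\<in>Basis - {k}. hi\<bullet>j - lo\<bullet>j)"
        by (rule prod.remove[OF finite_Basis k])
      also have "(\<Prod>j\<in>Basis - {k}. hi\<bullet>j - lo\<bullet>j) = (\<Prod>j\<in>Basis - {k}. 2*r)"
        by (rule prod.cong) (auto simp: loj hij)
      also have "\<dots> = L" using k by (simp add: L_def card_Diff_singleton)
      finally show ?thesis using k by (simp add: loj hij mult.commute)
    qed
    finally show "measure lebesgue (S \<inter> {x. x\<bullet>k \<le> c'}) \<le> measure lebesgue (S \<inter> {x. x\<bullet>k \<le> c}) + L * (c' - c)" .
  qed
qed

lemma slice_continuous:
  fixes S :: "'a::euclidean_space set"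
  assumes S: "compact S" and k: "k \<in> Basis"
  shows "continuous_on UNIV (\<lambda>c. measure lebesgue (S \<inter> {x. x\<bullet>k \<le> c}))"
proof -
  obtain L where L: "0 \<le> L" "\<And>c c'. c \<le> c' \<Longrightarrow>
     measure lebesgue (S \<inter> {x. x\<bullet>k \<le> c'}) \<le> measure lebesgue (S \<inter> {x. x\<bullet>k \<le> c}) + L * (c' - c)"
    using slice_lipschitz[OF S k] by blast
  have mono: "measure lebesgue (S \<inter> {x. x\<bullet>k \<le> c}) \<le> measure lebesgue (S \<inter> {x. x\<bullet>k \<le> c'})" if "c \<le> c'" for c c'
    using that S
    by (intro measure_mono_fmeasurable fmeasurableD lmeasurable_compact compact_Int_closed closed_halfspace_component_le) auto
  have "L-lipschitz_on UNIV (\<lambda>c. measure lebesgue (S \<inter> {x. x\<bullet>k \<le> c}))"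
  proof (rule lipschitz_onI)
    fix c c' :: real
    show "dist (measure lebesgue (S \<inter> {x. x\<bullet>k \<le> c})) (measure lebesgue (S \<inter> {x. x\<bullet>k \<le> c'})) \<le> L * dist c c'"
    proof (cases "c \<le> c'")
      case True
      then show ?thesis using L(2)[OF True] mono[OF True] by (simp add: dist_real_def)
    next
      case False
      then have "c' \<le> c" by simp
      then show ?thesis using L(2)[OF \<open>c' \<le> c\<close>] mono[OF \<open>c' \<le> c\<close>] by (simp add: dist_real_def)
    qed
  qed (use L in auto)
  then show ?thesis by (rule lipschitz_on_continuous_on)
qed

definition boxes_ok :: "('a::euclidean_space \<times> 'a) set \<Rightarrow> bool" where
  "boxes_ok C \<longleftrightarrow> finite C \<and> C \<noteq> {} \<and> (\<forall>p\<in>C. \<forall>i\<in>Basis. fst p\<bullet>i < snd p\<bullet>i) \<and>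
     (\<forall>p\<in>C. \<forall>q\<in>C. p \<noteq> q \<longrightarrow> (\<exists>i\<in>Basis. snd p\<bullet>i \<le> fst q\<bullet>i \<or> snd q\<bullet>i \<le> fst p\<bullet>i))"

definition UB :: "('a::euclidean_space \<times> 'a) set \<Rightarrow> 'a set" where
  "UB C = (\<Union>p\<in>C. cbox (fst p) (snd p))"

definition lowc :: "'a::euclidean_space \<Rightarrow> real \<Rightarrow> ('a \<times> 'a) set \<Rightarrow> ('a \<times> 'a) set" where
  "lowc k c C = (\<lambda>p. (fst p, \<Sum>i\<in>Basis. (if i = k then min (snd p\<bullet>k) c else snd p\<bullet>i) *\<^sub>R i)) ` {p\<in>C. fst p\<bullet>k < c}"

definition upc :: "'a::euclidean_space \<Rightarrow> real \<Rightarrow> ('a \<times> 'a) set \<Rightarrow> ('a \<times> 'a) set" where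
  "upc k c C = (\<lambda>p. (\<Sum>i\<in>Basis. (if i = k then max (fst p\<bullet>k) c else fst p\<bullet>i) *\<^sub>R i, snd p)) ` {p\<in>C. c < snd p\<bullet>k}"

lemma inner_sum_Basis_coord:
  fixes f :: "'a::euclidean_space \<Rightarrow> real"
  assumes "j \<in> Basis" shows "(\<Sum>i\<in>Basis. f i *\<^sub>R i) \<bullet> j = f j"
  using assms by (simp add: inner_sum_left inner_Basis if_distrib cong: if_cong)

lemma compact_UB: "finite C \<Longrightarrow> compact (UB C)"
  unfolding UB_def by (intro compact_UN compact_cbox)

lemma UB_lowc_eq:
  assumes k: "k \<in> Basis"
  shows "UB (lowc k c C) = (\<Union>p\<in>{p\<in>C. fst p\<bullet>k < c}. cbox (fst p) (snd p) \<inter> {x. x\<bullet>k \<le> c})"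
  unfolding UB_def lowc_def using interval_split(1)[OF k] by (simp add: image_image)

lemma UB_upc_eq:
  assumes k: "k \<in> Basis"
  shows "UB (upc k c C) = (\<Union>p\<in>{p\<in>C. c < snd p\<bullet>k}. cbox (fst p) (snd p) \<inter> {x. x\<bullet>k \<ge> c})"
  unfolding UB_def upc_def using interval_split(2)[OF k] by (simp add: image_image)

lemma measure_lowc:
  assumes k: "k \<in> Basis" and C: "finite C"
  shows "measure lebesgue (UB (lowc k c C)) = measure lebesgue (UB C \<inter> {x. x\<bullet>k \<le> c})"
proof (rule squeeze_measure[where N="{x. x\<bullet>k = c}"])
  show "UB (lowc k c C) \<subseteq> UB C \<inter> {x. x\<bullet>k \<le> c}"
    unfolding UB_lowc_eq[OF k] by (auto simp: UB_def)
  show "UB C \<inter> {x. x \<bullet> k \<le> c} - UB (lowc k c C) \<subseteq> {x. x \<bullet> k = c}"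
  proof
    fix x assume x: "x \<in> UB C \<inter> {x. x\<bullet>k \<le> c} - UB (lowc k c C)"
    then obtain p where p: "p\<in>C" "x \<in> cbox (fst p) (snd p)" "x\<bullet>k \<le> c" by (auto simp: UB_def)
    have "fst p\<bullet>k \<le> x\<bullet>k" using p(2) k by (auto simp: mem_box)
    moreover have "\<not> fst p\<bullet>k < c" using x p unfolding UB_lowc_eq[OF k] by auto
    ultimately show "x \<in> {x. x\<bullet>k = c}" using p by auto
  qed
  show "negligible {x. x \<bullet> k = c}" by (rule hyperplane_negl[OF k])
  show "UB C \<inter> {x. x \<bullet> k \<le> c} \<in> lmeasurable"
    by (intro lmeasurable_compact compact_Int_closed compact_UB C closed_halfspace_component_le)
qed

lemma measure_upc:
  assumes k: "k \<in> Basis" and C: "finite C"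
  shows "measure lebesgue (UB (upc k c C)) = measure lebesgue (UB C \<inter> {x. x\<bullet>k \<ge> c})"
proof (rule squeeze_measure[where N="{x. x\<bullet>k = c}"])
  show "UB (upc k c C) \<subseteq> UB C \<inter> {x. x\<bullet>k \<ge> c}"
    unfolding UB_upc_eq[OF k] by (auto simp: UB_def)
  show "UB C \<inter> {x. x \<bullet> k \<ge> c} - UB (upc k c C) \<subseteq> {x. x \<bullet> k = c}"
  proof
    fix x assume x: "x \<in> UB C \<inter> {x. x\<bullet>k \<ge> c} - UB (upc k c C)"
    then obtain p where p: "p\<in>C" "x \<in> cbox (fst p) (snd p)" "x\<bullet>k \<ge> c" by (auto simp: UB_def)
    have "snd p\<bullet>k \<ge> x\<bullet>k" using p(2) k by (auto simp: mem_box)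
    moreover have "\<not> c < snd p\<bullet>k" using x p unfolding UB_upc_eq[OF k] by auto
    ultimately show "x \<in> {x. x\<bullet>k = c}" using p by auto
  qed
  show "negligible {x. x \<bullet> k = c}" by (rule hyperplane_negl[OF k])
  show "UB C \<inter> {x. x \<bullet> k \<ge> c} \<in> lmeasurable"
    by (intro lmeasurable_compact compact_Int_closed compact_UB C closed_halfspace_component_ge)
qed

lemma card_lowc: "finite C \<Longrightarrow> card (lowc k c C) \<le> card {p\<in>C. fst p\<bullet>k < c}"
  unfolding lowc_def by (rule card_image_le) simp

lemma card_upc: "finite C \<Longrightarrow> card (upc k c C) \<le> card {p\<in>C. c < snd p\<bullet>k}"
  unfolding upc_def by (rule card_image_le) simp

lemma card_filter_le: "finite C \<Longrightarrow> card {p\<in>C. P p} \<le> card C"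
  by (rule card_mono) auto

lemma card_filter_less: "finite C \<Longrightarrow> q \<in> C \<Longrightarrow> \<not> P q \<Longrightarrow> card {p\<in>C. P p} < card C"
  by (rule psubset_card_mono) auto

lemma boxes_ok_lowc:
  assumes ok: "boxes_ok C" and k: "k \<in> Basis" and ne: "lowc k c C \<noteq> {}"
  shows "boxes_ok (lowc k c C)"
proof -
  define g where "g = (\<lambda>p::'a\<times>'a. (fst p, \<Sum>i\<in>Basis. (if i = k then min (snd p\<bullet>k) c else snd p\<bullet>i) *\<^sub>R i))"
  have L: "lowc k c C = g ` {p\<in>C. fst p\<bullet>k < c}" by (simp add: lowc_def g_def)
  have g1: "fst (g p) = fst p" for p by (simp add: g_def)
  have g2: "snd (g p)\<bullet>j = (if j = k then min (snd p\<bullet>k) c else snd p\<bullet>j)" if "j \<in> Basis" for p j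
    using that by (simp add: g_def inner_sum_Basis_coord)
  have g2le: "snd (g p)\<bullet>j \<le> snd p\<bullet>j" if "j \<in> Basis" for p j
    using g2[OF that] by auto
  show ?thesis
    unfolding boxes_ok_def
  proof (intro conjI ballI impI)
    show "finite (lowc k c C)" using ok by (simp add: L boxes_ok_def)
    show "lowc k c C \<noteq> {}" by (rule ne)
  next
    fix p' i assume p': "p' \<in> lowc k c C" and i: "i \<in> (Basis::'a set)"
    then obtain p where p: "p \<in> C" "fst p\<bullet>k < c" and pp: "p' = g p" unfolding L by auto
    show "fst p'\<bullet>i < snd p'\<bullet>i"
      using ok p i unfolding pp g1 g2[OF i] boxes_ok_def by auto
  next
    fix p' q' assume p': "p' \<in> lowc k c C" and q': "q' \<in> lowc k c C" and ne: "p' \<noteq> q'"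
    obtain p where p: "p \<in> C" and pp: "p' = g p" using p' unfolding L by auto
    obtain q where q: "q \<in> C" and qq: "q' = g q" using q' unfolding L by auto
    have "p \<noteq> q" using ne pp qq by auto
    then obtain i where i: "i \<in> Basis" "snd p\<bullet>i \<le> fst q\<bullet>i \<or> snd q\<bullet>i \<le> fst p\<bullet>i"
      using ok p q unfolding boxes_ok_def by blast
    show "\<exists>i\<in>Basis. snd p'\<bullet>i \<le> fst q'\<bullet>i \<or> snd q'\<bullet>i \<le> fst p'\<bullet>i"
      using i g2le[OF i(1), of p] g2le[OF i(1), of q] unfolding pp qq g1 by force
  qed
qed

lemma boxes_ok_upc:
  assumes ok: "boxes_ok C" and k: "k \<in> Basis" and ne: "upc k c C \<noteq> {}"
  shows "boxes_ok (upc k c C)"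
proof -
  define g where "g = (\<lambda>p::'a\<times>'a. (\<Sum>i\<in>Basis. (if i = k then max (fst p\<bullet>k) c else fst p\<bullet>i) *\<^sub>R i, snd p))"
  have L: "upc k c C = g ` {p\<in>C. c < snd p\<bullet>k}" by (simp add: upc_def g_def)
  have g1: "snd (g p) = snd p" for p by (simp add: g_def)
  have g2: "fst (g p)\<bullet>j = (if j = k then max (fst p\<bullet>k) c else fst p\<bullet>j)" if "j \<in> Basis" for p j
    using that by (simp add: g_def inner_sum_Basis_coord)
  have g2le: "fst (g p)\<bullet>j \<ge> fst p\<bullet>j" if "j \<in> Basis" for p j
    using g2[OF that] by auto
  show ?thesis
    unfolding boxes_ok_def
  proof (intro conjI ballI impI)
    show "finite (upc k c C)" using ok by (simp add: L boxes_ok_def)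
    show "upc k c C \<noteq> {}" by (rule ne)
  next
    fix p' i assume p': "p' \<in> upc k c C" and i: "i \<in> (Basis::'a set)"
    then obtain p where p: "p \<in> C" "c < snd p\<bullet>k" and pp: "p' = g p" unfolding L by auto
    show "fst p'\<bullet>i < snd p'\<bullet>i"
      using ok p i unfolding pp g1 g2[OF i] boxes_ok_def by auto
  next
    fix p' q' assume p': "p' \<in> upc k c C" and q': "q' \<in> upc k c C" and ne: "p' \<noteq> q'"
    obtain p where p: "p \<in> C" and pp: "p' = g p" using p' unfolding L by auto
    obtain q where q: "q \<in> C" and qq: "q' = g q" using q' unfolding L by auto
    have "p \<noteq> q" using ne pp qq by auto
    then obtain i where i: "i \<in> Basis" "snd p\<bullet>i \<le> fst q\<bullet>i \<or> snd q\<bullet>i \<le> fst p\<bullet>i"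
      using ok p q unfolding boxes_ok_def by blast
    show "\<exists>i\<in>Basis. snd p'\<bullet>i \<le> fst q'\<bullet>i \<or> snd q'\<bullet>i \<le> fst p'\<bullet>i"
      using i g2le[OF i(1), of p] g2le[OF i(1), of q] unfolding pp qq g1 by force
  qed
qed

lemma measure_UB_pos:
  assumes ok: "boxes_ok C" shows "measure lebesgue (UB C) > 0"
proof -
  obtain p where p: "p \<in> C" using ok unfolding boxes_ok_def by auto
  have lt: "\<forall>i\<in>Basis. fst p\<bullet>i < snd p\<bullet>i" using ok p unfolding boxes_ok_def by auto
  then have "measure lebesgue (cbox (fst p) (snd p)) = (\<Prod>i\<in>Basis. snd p\<bullet>i - fst p\<bullet>i)"
    by (intro measure_cbox_prod) (auto simp: less_imp_le)
  also have "\<dots> > 0" using lt by (intro prod_pos) auto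
  finally have "measure lebesgue (cbox (fst p) (snd p)) > 0" .
  moreover have "measure lebesgue (cbox (fst p) (snd p)) \<le> measure lebesgue (UB C)"
    using ok p unfolding boxes_ok_def
    by (intro measure_mono_fmeasurable fmeasurableD lmeasurable_compact compact_UB lmeasurable_cbox)
       (auto simp: UB_def)
  ultimately show ?thesis by linarith
qed

lemma lowc_nonempty: "p \<in> C \<Longrightarrow> fst p\<bullet>k < c \<Longrightarrow> lowc k c C \<noteq> {}"
  unfolding lowc_def by (cases p) force

lemma upc_nonempty: "p \<in> C \<Longrightarrow> c < snd p\<bullet>k \<Longrightarrow> upc k c C \<noteq> {}"
  unfolding upc_def by (cases p) force

lemma UB_lowc_sub: "k \<in> Basis \<Longrightarrow> UB (lowc k c C) \<subseteq> UB C \<inter> {x. x\<bullet>k \<le> c}"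
  unfolding UB_lowc_eq by (auto simp: UB_def)

lemma UB_upc_sub: "k \<in> Basis \<Longrightarrow> UB (upc k c C) \<subseteq> UB C \<inter> {x. x\<bullet>k \<ge> c}"
  unfolding UB_upc_eq by (auto simp: UB_def)

lemma powr_split_aux:
  fixes t a b l :: real
  assumes "0 < t" "0 \<le> a" "0 \<le> b" shows "(t * a) powr l * (t * b) powr (1 - l) = t * (a powr l * b powr (1 - l))"
proof -
  have "(t * a) powr l * (t * b) powr (1 - l) = (t powr l * t powr (1 - l)) * (a powr l * b powr (1 - l))"
    by (simp only: powr_mult) (simp add: mult_ac)
  also have "t powr l * t powr (1 - l) = t"
    using assms by (simp add: powr_add[symmetric])
  finally show ?thesis .
qed

lemma ho_step:
  fixes A B :: "('a::euclidean_space \<times> 'a) set"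
  assumes okA: "boxes_ok A" and cA: "2 \<le> card A" and okB: "boxes_ok B" and l: "0 < l" "l < 1"
    and IH: "\<And>A' B' :: ('a \<times> 'a) set. boxes_ok A' \<Longrightarrow> boxes_ok B' \<Longrightarrow> card A' < card A \<Longrightarrow> card B' \<le> card B \<Longrightarrow>
      measure lebesgue (UB A') powr l * measure lebesgue (UB B') powr (1-l) \<le> measure lebesgue (msum l (UB A') (UB B'))"
  shows "measure lebesgue (UB A) powr l * measure lebesgue (UB B) powr (1-l) \<le> measure lebesgue (msum l (UB A) (UB B))"
proof -
  have finA: "finite A" and finB: "finite B" using okA okB by (auto simp: boxes_ok_def)
  obtain p where p: "p \<in> A" using okA unfolding boxes_ok_def by auto
  have "card (A - {p}) \<ge> 1" using cA p finA by (simp add: card_Diff_singleton)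
  then have "A - {p} \<noteq> {}" by (metis card.empty not_one_le_zero)
  then obtain q where q: "q \<in> A" "q \<noteq> p" by blast
  obtain k where k: "k \<in> Basis" "snd p\<bullet>k \<le> fst q\<bullet>k \<or> snd q\<bullet>k \<le> fst p\<bullet>k"
    using okA p q unfolding boxes_ok_def by metis
  obtain P Q where PQ: "P \<in> A" "Q \<in> A" "snd P\<bullet>k \<le> fst Q\<bullet>k"
    using k p q by blast
  have ltA: "fst r\<bullet>k < snd r\<bullet>k" if "r \<in> A" for r using okA that k unfolding boxes_ok_def by blast
  define c where "c = snd P\<bullet>k"
  define A1 where "A1 = lowc k c A"
  define A2 where "A2 = upc k c A"
  have A1ne: "A1 \<noteq> {}" unfolding A1_def using ltA[OF PQ(1)] PQ(1) by (intro lowc_nonempty[OF PQ(1)]) (auto simp: c_def)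
  have A2ne: "A2 \<noteq> {}" unfolding A2_def using ltA[OF PQ(2)] PQ by (intro upc_nonempty[OF PQ(2)]) (auto simp: c_def)
  have okA1: "boxes_ok A1" unfolding A1_def using boxes_ok_lowc okA k A1ne A1_def by blast
  have okA2: "boxes_ok A2" unfolding A2_def using boxes_ok_upc okA k A2ne A2_def by blast
  have cA1: "card A1 < card A"
    unfolding A1_def using card_lowc[OF finA, of k c] card_filter_less[OF finA PQ(2), of "\<lambda>p. fst p\<bullet>k < c"] PQ
    by (simp add: c_def)
  have cA2: "card A2 < card A"
    unfolding A2_def using card_upc[OF finA, of k c] card_filter_less[OF finA PQ(1), of "\<lambda>p. c < snd p\<bullet>k"]
    by (simp add: c_def)
  define a where "a = measure lebesgue (UB A)"
  define a1 where "a1 = measure lebesgue (UB A1)"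
  define a2 where "a2 = measure lebesgue (UB A2)"
  have a12: "a = a1 + a2"
    unfolding a_def a1_def a2_def A1_def A2_def measure_lowc[OF k(1) finA] measure_upc[OF k(1) finA]
    by (rule split_measure[OF compact_UB[OF finA] k(1)])
  have a1pos: "a1 > 0" unfolding a1_def by (rule measure_UB_pos[OF okA1])
  have a2pos: "a2 > 0" unfolding a2_def by (rule measure_UB_pos[OF okA2])
  define \<theta> where "\<theta> = a1 / a"
  have th: "0 < \<theta>" "\<theta> < 1" using a1pos a2pos a12 by (auto simp: \<theta>_def field_simps)
  have a1eq: "a1 = \<theta> * a" and a2eq: "a2 = (1 - \<theta>) * a"
    using a1pos a2pos a12 by (auto simp: \<theta>_def field_simps)
  define b where "b = measure lebesgue (UB B)"
  have bpos: "b > 0" unfolding b_def by (rule measure_UB_pos[OF okB])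
  define F where "F = (\<lambda>d. measure lebesgue (UB B \<inter> {x. x\<bullet>k \<le> d}))"
  obtain r where r: "\<forall>x\<in>UB B. norm x \<le> r" "0 \<le> r"
    using compact_imp_bounded[OF compact_UB[OF finB]] unfolding bounded_pos by (auto simp: less_imp_le)
  have xk: "\<bar>x\<bullet>k\<bar> \<le> r" if "x \<in> UB B" for x
    using r that Basis_le_norm[OF k(1), of x] by fastforce
  have F0: "F (-r-1) = 0"
  proof -
    have "UB B \<inter> {x. x\<bullet>k \<le> -r-1} = {}" using xk by fastforce
    then show ?thesis by (simp add: F_def)
  qed
  have F1: "F r = b"
  proof -
    have "UB B \<inter> {x. x\<bullet>k \<le> r} = UB B" using xk by fastforce
    then show ?thesis by (simp add: F_def b_def)
  qed
  have Fc: "continuous_on {-r-1..r} F"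
    unfolding F_def using slice_continuous[OF compact_UB[OF finB] k(1)] continuous_on_subset by blast
  obtain d where d: "F d = \<theta> * b"
    using IVT'[of F "-r-1" "\<theta> * b" r] F0 F1 Fc th bpos r by (auto simp: mult_le_cancel_right1 less_imp_le)
  define B1 where "B1 = lowc k d B"
  define B2 where "B2 = upc k d B"
  have b1: "measure lebesgue (UB B1) = \<theta> * b"
    unfolding B1_def measure_lowc[OF k(1) finB] using d by (simp add: F_def)
  have b2: "measure lebesgue (UB B2) = (1 - \<theta>) * b"
    using split_measure[OF compact_UB[OF finB] k(1), of d] b1
    unfolding B1_def B2_def measure_lowc[OF k(1) finB] measure_upc[OF k(1) finB] b_def
    by (simp add: algebra_simps)
  have B1ne: "B1 \<noteq> {}"
  proof
    assume "B1 = {}" then have "measure lebesgue (UB B1) = 0" by (simp add: UB_def)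
    then show False using b1 th bpos by simp
  qed
  have B2ne: "B2 \<noteq> {}"
  proof
    assume "B2 = {}" then have "measure lebesgue (UB B2) = 0" by (simp add: UB_def)
    then show False using b2 th bpos by simp
  qed
  have okB1: "boxes_ok B1" unfolding B1_def using boxes_ok_lowc okB k B1ne B1_def by blast
  have okB2: "boxes_ok B2" unfolding B2_def using boxes_ok_upc okB k B2ne B2_def by blast
  have cB1: "card B1 \<le> card B"
    unfolding B1_def using card_lowc[OF finB, of k d] card_filter_le[OF finB, of "\<lambda>p. fst p\<bullet>k < d"] by linarith
  have cB2: "card B2 \<le> card B"
    unfolding B2_def using card_upc[OF finB, of k d] card_filter_le[OF finB, of "\<lambda>p. d < snd p\<bullet>k"] by linarith
  define e where "e = l * c + (1 - l) * d"
  define M where "M = msum l (UB A) (UB B)"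
  have finA1: "finite A1" and finA2: "finite A2" and finB1: "finite B1" and finB2: "finite B2"
    using okA1 okA2 okB1 okB2 by (auto simp: boxes_ok_def)
  have M1: "msum l (UB A1) (UB B1) \<subseteq> M \<inter> {x. x\<bullet>k \<le> e}"
  proof
    fix x assume "x \<in> msum l (UB A1) (UB B1)"
    then obtain y z where y: "y \<in> UB A1" and z: "z \<in> UB B1" and x: "x = l *\<^sub>R y + (1-l) *\<^sub>R z"
      unfolding msum_iff by blast
    have y': "y \<in> UB A" "y\<bullet>k \<le> c" using y UB_lowc_sub[OF k(1)] unfolding A1_def by blast+
    have z': "z \<in> UB B" "z\<bullet>k \<le> d" using z UB_lowc_sub[OF k(1)] unfolding B1_def by blast+
    have "x\<bullet>k = l * (y\<bullet>k) + (1-l) * (z\<bullet>k)" by (simp add: x inner_simps)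
    also have "\<dots> \<le> l * c + (1-l) * d"
      using y' z' l by (intro add_mono mult_left_mono) auto
    finally show "x \<in> M \<inter> {x. x\<bullet>k \<le> e}" using y' z' x by (auto simp: M_def e_def msum_iff)
  qed
  have M2: "msum l (UB A2) (UB B2) \<subseteq> M \<inter> {x. x\<bullet>k \<ge> e}"
  proof
    fix x assume "x \<in> msum l (UB A2) (UB B2)"
    then obtain y z where y: "y \<in> UB A2" and z: "z \<in> UB B2" and x: "x = l *\<^sub>R y + (1-l) *\<^sub>R z"
      unfolding msum_iff by blast
    have y': "y \<in> UB A" "y\<bullet>k \<ge> c" using y UB_upc_sub[OF k(1)] unfolding A2_def by blast+
    have z': "z \<in> UB B" "z\<bullet>k \<ge> d" using z UB_upc_sub[OF k(1)] unfolding B2_def by blast+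
    have "l * c + (1-l) * d \<le> l * (y\<bullet>k) + (1-l) * (z\<bullet>k)"
      using y' z' l by (intro add_mono mult_left_mono) auto
    also have "\<dots> = x\<bullet>k" by (simp add: x inner_simps)
    finally show "x \<in> M \<inter> {x. x\<bullet>k \<ge> e}" using y' z' x by (auto simp: M_def e_def msum_iff)
  qed
  have "measure lebesgue (msum l (UB A1) (UB B1)) + measure lebesgue (msum l (UB A2) (UB B2)) \<le> measure lebesgue M"
    by (rule split_sub_measure[OF _ k(1) M1 _ M2])
       (auto intro!: compact_msum compact_UB finA finB finA1 finA2 finB1 finB2 simp: M_def)
  moreover have "measure lebesgue (msum l (UB A1) (UB B1)) \<ge> (\<theta> * a) powr l * (\<theta> * b) powr (1-l)"
    using IH[OF okA1 okB1 cA1 cB1] b1 a1eq by (simp add: a1_def)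
  moreover have "measure lebesgue (msum l (UB A2) (UB B2)) \<ge> ((1-\<theta>) * a) powr l * ((1-\<theta>) * b) powr (1-l)"
    using IH[OF okA2 okB2 cA2 cB2] b2 a2eq by (simp add: a2_def)
  moreover have "(\<theta> * a) powr l * (\<theta> * b) powr (1-l) = \<theta> * (a powr l * b powr (1-l))"
    using th a1pos a2pos a12 bpos by (intro powr_split_aux) auto
  moreover have "((1-\<theta>) * a) powr l * ((1-\<theta>) * b) powr (1-l) = (1-\<theta>) * (a powr l * b powr (1-l))"
    using th a1pos a2pos a12 bpos by (intro powr_split_aux) auto
  ultimately show ?thesis unfolding M_def a_def b_def by (simp add: algebra_simps)
qed

lemma ho_main:
  fixes A B :: "('a::euclidean_space \<times> 'a) set"
  assumes "boxes_ok A" "boxes_ok B" "0 < l" "l < 1"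
  shows "measure lebesgue (UB A) powr l * measure lebesgue (UB B) powr (1-l) \<le> measure lebesgue (msum l (UB A) (UB B))"
  using assms
proof (induction "card A + card B" arbitrary: A B l rule: less_induct)
  case less
  show ?case
  proof (cases "2 \<le> card A")
    case True
    show ?thesis
      by (rule ho_step[OF less.prems(1) True less.prems(2-4)])
         (rule less.hyps, auto simp: less.prems)
  next
    case nA: False
    show ?thesis
    proof (cases "2 \<le> card B")
      case True
      have "measure lebesgue (UB B) powr (1-l) * measure lebesgue (UB A) powr (1-(1-l))
         \<le> measure lebesgue (msum (1-l) (UB B) (UB A))"
      proof (rule ho_step[OF less.prems(2) True less.prems(1)])
        show "0 < 1 - l" "1 - l < 1" using less.prems by auto
        fix A' B' :: "('a \<times> 'a) set"
        assume h: "boxes_ok A'" "boxes_ok B'" "card A' < card B" "card B' \<le> card A"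
        have "measure lebesgue (UB B') powr l * measure lebesgue (UB A') powr (1-l)
           \<le> measure lebesgue (msum l (UB B') (UB A'))"
          by (rule less.hyps) (use h less.prems in auto)
        then show "measure lebesgue (UB A') powr (1-l) * measure lebesgue (UB B') powr (1-(1-l))
           \<le> measure lebesgue (msum (1-l) (UB A') (UB B'))"
          by (simp add: msum_swap[of l "UB B'"] mult.commute)
      qed
      then show ?thesis by (simp add: msum_swap[of l "UB A"] mult.commute)
    next
      case nB: False
      have fA: "finite A" "A \<noteq> {}" and fB: "finite B" "B \<noteq> {}"
        using less.prems by (auto simp: boxes_ok_def)
      have "card A > 0" using fA by auto
      then have "card A = 1" using nA by linarith
      then obtain pa where pa: "A = {pa}" by (rule card_1_singletonE)
      have "card B > 0" using fB by auto
      then have "card B = 1" using nB by linarith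
      then obtain pb where pb: "B = {pb}" by (rule card_1_singletonE)
      have "\<forall>i\<in>Basis. fst pa\<bullet>i \<le> snd pa\<bullet>i" "\<forall>i\<in>Basis. fst pb\<bullet>i \<le> snd pb\<bullet>i"
        using less.prems pa pb by (auto simp: boxes_ok_def less_imp_le)
      from box_bm[OF this less.prems(3,4)] show ?thesis by (simp add: pa pb UB_def)
    qed
  qed
qed

lemma grid_cover:
  fixes A :: "'a::euclidean_space set"
  assumes A: "compact A" "A \<noteq> {}" and d: "0 < \<delta>"
  obtains C where "boxes_ok C" "A \<subseteq> UB C" "\<And>x. x \<in> UB C \<Longrightarrow> \<exists>a\<in>A. dist x a \<le> \<delta>"
proof -
  obtain r where r: "\<forall>x\<in>A. norm x \<le> r" "0 \<le> r"
    using compact_imp_bounded[OF A(1)] unfolding bounded_pos by (auto simp: less_imp_le)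
  define h where "h = \<delta> / (DIM('a) + 1)"
  have h: "0 < h" using d by (simp add: h_def)
  define N :: int where "N = \<lceil>r / h\<rceil> + 1"
  define lo where "lo z = (\<Sum>i\<in>Basis. (h * of_int (z i)) *\<^sub>R i)" for z :: "'a \<Rightarrow> int"
  define hi where "hi z = (\<Sum>i\<in>Basis. (h * (of_int (z i) + 1)) *\<^sub>R i)" for z :: "'a \<Rightarrow> int"
  have loi: "lo z\<bullet>i = h * of_int (z i)" if "i \<in> Basis" for z i
    using that by (simp add: lo_def inner_sum_Basis_coord)
  have hii: "hi z\<bullet>i = h * (of_int (z i) + 1)" if "i \<in> Basis" for z i
    using that by (simp add: hi_def inner_sum_Basis_coord)
  define Z where "Z = {z \<in> Basis \<rightarrow>\<^sub>E {-N..N}. cbox (lo z) (hi z) \<inter> A \<noteq> {}}"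
  define C where "C = (\<lambda>z. (lo z, hi z)) ` Z"
  have finZ: "finite Z" unfolding Z_def by (rule finite_subset[OF _ finite_PiE[of Basis "\<lambda>_. {-N..N}"]]) auto
  define za where "za a = restrict (\<lambda>i. \<lfloor>a\<bullet>i / h\<rfloor>) Basis" for a :: 'a
  have za_in: "a \<in> cbox (lo (za a)) (hi (za a))" for a
    unfolding mem_box
  proof
    fix i :: 'a assume i: "i \<in> Basis"
    have "h * of_int \<lfloor>a\<bullet>i / h\<rfloor> \<le> h * (a\<bullet>i / h)"
      using h by (intro mult_left_mono) auto
    moreover have "h * (a\<bullet>i / h) \<le> h * (of_int \<lfloor>a\<bullet>i / h\<rfloor> + 1)"
      using h by (intro mult_left_mono) (auto simp: less_imp_le)
    ultimately show "lo (za a)\<bullet>i \<le> a\<bullet>i \<and> a\<bullet>i \<le> hi (za a)\<bullet>i"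
      using h i by (simp add: loi hii za_def)
  qed
  have za_Z: "za a \<in> Z" if a: "a \<in> A" for a
  proof -
    have "za a \<in> Basis \<rightarrow>\<^sub>E {-N..N}"
    proof
      fix i :: 'a assume i: "i \<in> Basis"
      have ai: "\<bar>a\<bullet>i\<bar> \<le> r" using r a Basis_le_norm[OF i, of a] by fastforce
      have "a\<bullet>i / h \<le> r / h" using ai h by (intro divide_right_mono) auto
      then have u: "\<lfloor>a\<bullet>i / h\<rfloor> \<le> N" unfolding N_def by linarith
      have "- r / h \<le> a\<bullet>i / h" using ai h by (intro divide_right_mono) auto
      then have "- \<lceil>r / h\<rceil> \<le> \<lfloor>a\<bullet>i / h\<rfloor>" by (simp add: ceiling_def floor_mono)
      then have v: "-N \<le> \<lfloor>a\<bullet>i / h\<rfloor>" unfolding N_def by linarith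
      show "za a i \<in> {-N..N}" using u v i by (simp add: za_def)
    qed (simp add: za_def)
    then show ?thesis unfolding Z_def using za_in[of a] a by blast
  qed
  show ?thesis
  proof (rule that)
    show "boxes_ok C"
      unfolding boxes_ok_def
    proof (intro conjI ballI impI)
      show "finite C" using finZ by (simp add: C_def)
      obtain a where "a \<in> A" using A(2) by blast
      then show "C \<noteq> {}" using za_Z by (auto simp: C_def)
    next
      fix p i assume p: "p \<in> C" and i: "i \<in> (Basis::'a set)"
      then show "fst p\<bullet>i < snd p\<bullet>i" using h by (auto simp: C_def loi hii)
    next
      fix p q assume p: "p \<in> C" and q: "q \<in> C" and pq: "p \<noteq> q"
      obtain z where z: "z \<in> Z" "p = (lo z, hi z)" using p by (auto simp: C_def)
      obtain z' where z': "z' \<in> Z" "q = (lo z', hi z')" using q by (auto simp: C_def)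
      have "z \<noteq> z'" using pq z z' by auto
      moreover have "z \<in> Basis \<rightarrow>\<^sub>E {-N..N}" "z' \<in> Basis \<rightarrow>\<^sub>E {-N..N}" using z z' by (auto simp: Z_def)
      ultimately obtain i where i: "i \<in> Basis" "z i \<noteq> z' i"
        by (metis PiE_ext)
      show "\<exists>i\<in>Basis. snd p\<bullet>i \<le> fst q\<bullet>i \<or> snd q\<bullet>i \<le> fst p\<bullet>i"
      proof (intro bexI[OF _ i(1)])
        have "z i + 1 \<le> z' i \<or> z' i + 1 \<le> z i" using i(2) by linarith
        then have "of_int (z i) + 1 \<le> (of_int (z' i)::real) \<or> of_int (z' i) + 1 \<le> (of_int (z i)::real)"
          by (metis of_int_1 of_int_add of_int_le_iff)
        then show "snd p\<bullet>i \<le> fst q\<bullet>i \<or> snd q\<bullet>i \<le> fst p\<bullet>i"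
          using h i(1) z z' by (auto simp: loi hii)
      qed
    qed
    show "A \<subseteq> UB C"
    proof
      fix a assume "a \<in> A"
      then show "a \<in> UB C" using za_Z za_in unfolding UB_def C_def by force
    qed
    fix x assume "x \<in> UB C"
    then obtain z where z: "z \<in> Z" "x \<in> cbox (lo z) (hi z)" by (auto simp: UB_def C_def)
    then obtain a where a: "a \<in> A" "a \<in> cbox (lo z) (hi z)" by (auto simp: Z_def)
    have "\<bar>(x - a)\<bullet>i\<bar> \<le> h" if i: "i \<in> Basis" for i
    proof -
      have "lo z\<bullet>i \<le> x\<bullet>i" "x\<bullet>i \<le> hi z\<bullet>i" "lo z\<bullet>i \<le> a\<bullet>i" "a\<bullet>i \<le> hi z\<bullet>i"
        using z(2) a(2) i by (auto simp: mem_box)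
      then show ?thesis using i by (simp add: loi hii inner_diff_left algebra_simps abs_le_iff)
    qed
    then have "(\<Sum>i\<in>Basis. \<bar>(x - a)\<bullet>i\<bar>) \<le> (\<Sum>i\<in>(Basis::'a set). h)"
      by (intro sum_mono) auto
    then have "norm (x - a) \<le> (\<Sum>i\<in>(Basis::'a set). h)"
      using norm_le_l1[of "x - a"] by linarith
    also have "\<dots> = DIM('a) * h" by simp
    also have "\<dots> \<le> \<delta>" using d by (simp add: h_def field_simps)
    finally show "\<exists>a\<in>A. dist x a \<le> \<delta>" using a by (auto simp: dist_norm)
  qed
qed


lemma bm_compact_mult:
  fixes A B :: "'a::euclidean_space set"
  assumes A: "compact A" and B: "compact B" and l: "0 < l" "l < 1"
  shows "measure lebesgue A powr l * measure lebesgue B powr (1-l) \<le> measure lebesgue (msum l A B)"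
proof (cases "A = {} \<or> B = {}")
  case True
  then show ?thesis using l by (auto simp: measure_nonneg)
next
  case False
  then have Ane: "A \<noteq> {}" and Bne: "B \<noteq> {}" by auto
  define M where "M = msum l A B"
  have cM: "compact M" unfolding M_def by (rule compact_msum[OF A B])
  define T where "T n = (\<lambda>p. fst p + snd p) ` (M \<times> cball 0 (1 / real (Suc n)))" for n :: nat
  have cT: "compact (T n)" for n
    unfolding T_def by (intro compact_continuous_image continuous_intros compact_Times cM compact_cball)
  have Tmem: "x \<in> T n \<longleftrightarrow> (\<exists>m\<in>M. dist x m \<le> 1 / real (Suc n))" for x n
  proof
    assume "x \<in> T n"
    then obtain m u where "m \<in> M" "norm u \<le> 1 / real (Suc n)" "x = m + u"
      unfolding T_def by (auto simp: dist_norm)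
    then show "\<exists>m\<in>M. dist x m \<le> 1 / real (Suc n)" by (intro bexI[of _ m]) (auto simp: dist_norm)
  next
    assume "\<exists>m\<in>M. dist x m \<le> 1 / real (Suc n)"
    then obtain m where m: "m \<in> M" "dist x m \<le> 1 / real (Suc n)" by blast
    have "x = fst (m, x - m) + snd (m, x - m)" by simp
    moreover have "(m, x - m) \<in> M \<times> cball 0 (1 / real (Suc n))"
      using m by (simp add: dist_norm norm_minus_commute)
    ultimately show "x \<in> T n" unfolding T_def by blast
  qed
  have bound: "measure lebesgue A powr l * measure lebesgue B powr (1-l) \<le> measure lebesgue (T n)" for n
  proof -
    have dpos: "0 < 1 / real (Suc n)" by simp
    obtain CA where CA: "boxes_ok CA" "A \<subseteq> UB CA" "\<And>x. x \<in> UB CA \<Longrightarrow> \<exists>a\<in>A. dist x a \<le> 1 / real (Suc n)"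
      using grid_cover[OF A Ane dpos] by blast
    obtain CB where CB: "boxes_ok CB" "B \<subseteq> UB CB" "\<And>x. x \<in> UB CB \<Longrightarrow> \<exists>a\<in>B. dist x a \<le> 1 / real (Suc n)"
      using grid_cover[OF B Bne dpos] by blast
    have finCA: "finite CA" and finCB: "finite CB" using CA CB by (auto simp: boxes_ok_def)
    have sub: "msum l (UB CA) (UB CB) \<subseteq> T n"
    proof
      fix x assume "x \<in> msum l (UB CA) (UB CB)"
      then obtain y z where y: "y \<in> UB CA" and z: "z \<in> UB CB" and x: "x = l *\<^sub>R y + (1-l) *\<^sub>R z"
        unfolding msum_iff by blast
      obtain a where a: "a \<in> A" "dist y a \<le> 1 / real (Suc n)" using CA(3)[OF y] by blast
      obtain b where b: "b \<in> B" "dist z b \<le> 1 / real (Suc n)" using CB(3)[OF z] by blast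
      define m where "m = l *\<^sub>R a + (1-l) *\<^sub>R b"
      have mM: "m \<in> M" unfolding M_def m_def msum_iff using a b by blast
      have "x - m = l *\<^sub>R (y - a) + (1-l) *\<^sub>R (z - b)"
        by (simp add: x m_def algebra_simps)
      then have "norm (x - m) \<le> l * norm (y - a) + (1-l) * norm (z - b)"
        using l by (metis abs_of_nonneg less_eq_real_def norm_scaleR norm_triangle_le order_refl diff_ge_0_iff_ge)
      also have "\<dots> \<le> l * (1 / real (Suc n)) + (1-l) * (1 / real (Suc n))"
        using a b l by (intro add_mono mult_left_mono) (auto simp: dist_norm)
      also have "\<dots> = 1 / real (Suc n)" by (simp add: field_simps)
      finally show "x \<in> T n" unfolding Tmem using mM by (auto simp: dist_norm)
    qed
    have mA: "measure lebesgue A \<le> measure lebesgue (UB CA)"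
      by (intro measure_mono_fmeasurable CA(2) fmeasurableD lmeasurable_compact A compact_UB finCA)
    have mB: "measure lebesgue B \<le> measure lebesgue (UB CB)"
      by (intro measure_mono_fmeasurable CB(2) fmeasurableD lmeasurable_compact B compact_UB finCB)
    have "measure lebesgue A powr l * measure lebesgue B powr (1-l)
        \<le> measure lebesgue (UB CA) powr l * measure lebesgue (UB CB) powr (1-l)"
      using l mA mB by (intro mult_mono powr_mono2) (auto simp: measure_nonneg)
    also have "\<dots> \<le> measure lebesgue (msum l (UB CA) (UB CB))"
      by (rule ho_main[OF CA(1) CB(1) l])
    also have "\<dots> \<le> measure lebesgue (T n)"
      by (intro measure_mono_fmeasurable sub fmeasurableD lmeasurable_compact cT compact_msum compact_UB finCA finCB)
    finally show ?thesis .
  qed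
  have dec: "antimono T"
  proof (rule antimonoI)
    fix m n :: nat assume "m \<le> n"
    then have "1 / real (Suc n) \<le> 1 / real (Suc m)" by (simp add: frac_le)
    then show "T n \<le> T m" unfolding Tmem subset_eq by (meson Tmem order_trans)
  qed
  have inter: "(\<Inter>n. T n) = M"
  proof
    show "M \<subseteq> (\<Inter>n. T n)"
    proof
      fix x assume x: "x \<in> M"
      have "\<exists>m\<in>M. dist x m \<le> 1 / real (Suc n)" for n
        by (rule bexI[of _ x]) (use x in simp_all)
      then show "x \<in> (\<Inter>n. T n)" using Tmem by blast
    qed
    show "(\<Inter>n. T n) \<subseteq> M"
    proof
      fix x assume x: "x \<in> (\<Inter>n. T n)"
      have "x \<in> closure M"
        unfolding closure_approachable
      proof (intro allI impI)
        fix e :: real assume e: "0 < e"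
        obtain n where n: "inverse (real (Suc n)) < e" using reals_Archimedean[OF e] by blast
        obtain m where m: "m \<in> M" "dist x m \<le> 1 / real (Suc n)" using x Tmem by blast
        have "dist m x < e" using m(2) n by (simp add: dist_commute inverse_eq_divide)
        then show "\<exists>y\<in>M. dist y x < e" using m(1) by blast
      qed
      then show "x \<in> M" using cM by (simp add: compact_imp_closed closure_closed)
    qed
  qed
  have lim: "(\<lambda>n. measure lebesgue (T n)) \<longlonglongrightarrow> measure lebesgue (\<Inter>n. T n)"
    by (rule Lim_measure_decseq)
       (auto intro!: dec fmeasurableD2 lmeasurable_compact cT fmeasurableD)
  then have "(\<lambda>n. measure lebesgue (T n)) \<longlonglongrightarrow> measure lebesgue M" by (simp add: inter)
  then show ?thesis unfolding M_def[symmetric] using bound by (intro LIMSEQ_le_const) auto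
qed

lemma powr_inv_pow:
  fixes x :: real assumes "0 \<le> x" "0 < n"
  shows "(x powr (1 / real n)) ^ n = x"
proof (cases "x = 0")
  case True then show ?thesis using assms by simp
next
  case False
  then have "(x powr (1 / real n)) ^ n = (x powr (1 / real n)) powr (real n)"
    using assms by (simp add: powr_realpow)
  also have "\<dots> = x" using assms by (simp add: powr_powr)
  finally show ?thesis .
qed

lemma measure_scale_translate:
  fixes S :: "'a::euclidean_space set"
  shows "measure lebesgue ((\<lambda>x. r *\<^sub>R x + d) ` S) = \<bar>r\<bar> ^ DIM('a) * measure lebesgue S"
  using measure_lebesgue_affine[of r d S] by simp

lemma bm_point:
  fixes A B :: "'a::euclidean_space set"
  assumes B: "compact B" and p: "p \<in> A" and l: "l \<le> 1" and cA: "compact A"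
  shows "(1 - l) ^ DIM('a) * measure lebesgue B \<le> measure lebesgue (msum l A B)"
proof -
  have sub: "(\<lambda>x. (1-l) *\<^sub>R x + l *\<^sub>R p) ` B \<subseteq> msum l A B"
  proof
    fix w assume "w \<in> (\<lambda>x. (1-l) *\<^sub>R x + l *\<^sub>R p) ` B"
    then obtain b where b: "b \<in> B" "w = (1-l) *\<^sub>R b + l *\<^sub>R p" by blast
    then have "w = l *\<^sub>R p + (1-l) *\<^sub>R b" by (simp add: add.commute)
    then show "w \<in> msum l A B" unfolding msum_iff using p b(1) by blast
  qed
  have "(1 - l) ^ DIM('a) * measure lebesgue B = measure lebesgue ((\<lambda>x. (1-l) *\<^sub>R x + l *\<^sub>R p) ` B)"
    using l by (simp add: measure_scale_translate)
  also have "\<dots> \<le> measure lebesgue (msum l A B)"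
    by (intro measure_mono_fmeasurable sub fmeasurableD lmeasurable_compact compact_msum cA B
        compact_continuous_image continuous_intros continuous_on_id)
  finally show ?thesis .
qed

lemma bm_add:
  fixes A B :: "'a::euclidean_space set"
  assumes A: "compact A" "A \<noteq> {}" and B: "compact B" "B \<noteq> {}" and l: "0 < l" "l < 1"
  shows "(l * measure lebesgue A powr (1 / DIM('a)) + (1-l) * measure lebesgue B powr (1 / DIM('a))) ^ DIM('a)
     \<le> measure lebesgue (msum l A B)"
proof -
  define n where "n = DIM('a)"
  have n: "0 < n" by (simp add: n_def)
  define x where "x = measure lebesgue A"
  define y where "y = measure lebesgue B"
  have x0: "0 \<le> x" and y0: "0 \<le> y" by (auto simp: x_def y_def measure_nonneg)
  show ?thesis
  proof (cases "x = 0")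
    case True
    obtain p where p: "p \<in> A" using A by blast
    have "(l * x powr (1 / n) + (1-l) * y powr (1 / n)) ^ n = (1-l)^n * y"
      using True y0 n by (simp add: power_mult_distrib powr_inv_pow)
    also have "\<dots> \<le> measure lebesgue (msum l A B)"
      using bm_point[OF B(1) p _ A(1)] l by (simp add: n_def y_def)
    finally show ?thesis by (simp add: n_def x_def y_def)
  next
    case xne: False
    show ?thesis
    proof (cases "y = 0")
      case True
      obtain q where q: "q \<in> B" using B by blast
      have "(l * x powr (1 / n) + (1-l) * y powr (1 / n)) ^ n = l^n * x"
        using True x0 n by (simp add: power_mult_distrib powr_inv_pow)
      also have "\<dots> \<le> measure lebesgue (msum (1-l) B A)"
        using bm_point[OF A(1) q _ B(1), of "1-l"] l by (simp add: n_def x_def)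
      finally show ?thesis by (simp add: n_def x_def y_def msum_swap[of l A])
    next
      case yne: False
      have xp: "0 < x" and yp: "0 < y" using xne yne x0 y0 by auto
      define xr where "xr = x powr (1 / n)"
      define yr where "yr = y powr (1 / n)"
      have xr: "0 < xr" and yr: "0 < yr" using xp yp by (auto simp: xr_def yr_def)
      define s where "s = l * xr + (1-l) * yr"
      have s: "0 < s" using xr yr l by (simp add: s_def add_pos_pos)
      define A' where "A' = (\<lambda>v. (1/xr) *\<^sub>R v + 0) ` A"
      define B' where "B' = (\<lambda>v. (1/yr) *\<^sub>R v + 0) ` B"
      have cA': "compact A'" unfolding A'_def
        by (intro compact_continuous_image continuous_intros A(1))
      have cB': "compact B'" unfolding B'_def
        by (intro compact_continuous_image continuous_intros B(1))
      have mA': "measure lebesgue A' = 1"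
        unfolding A'_def measure_scale_translate using xr xp n
        by (simp add: x_def[symmetric] xr_def power_divide powr_inv_pow x0 n_def[symmetric])
      have mB': "measure lebesgue B' = 1"
        unfolding B'_def measure_scale_translate using yr yp n
        by (simp add: y_def[symmetric] yr_def power_divide powr_inv_pow y0 n_def[symmetric])
      define \<mu> where "\<mu> = l * xr / s"
      have mu: "0 < \<mu>" "\<mu> < 1" using l xr yr s by (auto simp: \<mu>_def s_def field_simps)
      have sub: "msum \<mu> A' B' \<subseteq> (\<lambda>v. (1/s) *\<^sub>R v + 0) ` msum l A B"
      proof
        fix w assume "w \<in> msum \<mu> A' B'"
        then obtain a b where a: "a \<in> A" and b: "b \<in> B"
          and w: "w = \<mu> *\<^sub>R ((1/xr) *\<^sub>R a) + (1-\<mu>) *\<^sub>R ((1/yr) *\<^sub>R b)"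
          unfolding msum_iff A'_def B'_def by auto
        have c1: "\<mu> * (1/xr) = l / s" using xr s by (simp add: \<mu>_def field_simps)
        have hs: "s - l * xr = (1-l) * yr" by (simp add: s_def)
        have "1 - \<mu> = (s - l * xr) / s" using s by (simp add: \<mu>_def field_simps)
        then have "1 - \<mu> = (1-l) * yr / s" using hs by simp
        then have c2: "(1 - \<mu>) * (1/yr) = (1-l) / s" using yr by simp
        have "w = (1/s) *\<^sub>R (l *\<^sub>R a + (1-l) *\<^sub>R b)"
          using c1 c2 by (simp add: w scaleR_add_right)
        moreover have "l *\<^sub>R a + (1-l) *\<^sub>R b \<in> msum l A B" using a b by (auto simp: msum_iff)
        ultimately show "w \<in> (\<lambda>v. (1/s) *\<^sub>R v + 0) ` msum l A B" by auto
      qed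
      have "1 \<le> measure lebesgue (msum \<mu> A' B')"
        using bm_compact_mult[OF cA' cB' mu] by (simp add: mA' mB')
      also have "\<dots> \<le> measure lebesgue ((\<lambda>v. (1/s) *\<^sub>R v + 0) ` msum l A B)"
        by (intro measure_mono_fmeasurable sub fmeasurableD lmeasurable_compact compact_msum cA' cB'
            compact_continuous_image continuous_intros A(1) B(1))
      also have "\<dots> = (1/s)^n * measure lebesgue (msum l A B)"
        unfolding measure_scale_translate using s by (simp add: n_def)
      finally have "s ^ n \<le> measure lebesgue (msum l A B)"
        using s by (simp add: power_divide field_simps)
      then show ?thesis by (simp add: s_def xr_def yr_def x_def y_def n_def)
    qed
  qed
qed

lemma additive_mono_linear:
  fixes \<mu> :: "real \<Rightarrow> real"
  assumes add: "\<And>h k. 0 \<le> h \<Longrightarrow> 0 \<le> k \<Longrightarrow> \<mu> (h + k) = \<mu> h + \<mu> k"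
    and mono: "\<And>h k. 0 \<le> h \<Longrightarrow> h \<le> k \<Longrightarrow> \<mu> h \<le> \<mu> k"
    and h: "0 \<le> h"
  shows "\<mu> h = h * \<mu> 1"
proof -
  have z: "\<mu> 0 = 0" using add[of 0 0] by simp
  have mult: "\<mu> (real j * x) = real j * \<mu> x" if "0 \<le> x" for j x
  proof (induction j)
    case 0 then show ?case using z by simp
  next
    case (Suc j)
    have "\<mu> (real (Suc j) * x) = \<mu> (real j * x + x)" by (simp add: algebra_simps)
    also have "\<dots> = \<mu> (real j * x) + \<mu> x" using that by (intro add) auto
    finally show ?case using Suc by (simp add: algebra_simps)
  qed
  have m1: "0 \<le> \<mu> 1" using mono[of 0 1] z by simp
  have bnd: "\<bar>\<mu> h - h * \<mu> 1\<bar> \<le> \<mu> 1 / real N" if N: "0 < N" for N :: nat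
  proof -
    have unit: "\<mu> (1 / real N) = \<mu> 1 / real N"
      using mult[of "1 / real N" N] N by (simp add: field_simps)
    define j where "j = nat \<lfloor>real N * h\<rfloor>"
    have j1: "real j \<le> real N * h" using h by (simp add: j_def)
    have j2: "real N * h < real j + 1" using h by (simp add: j_def)
    have jh1: "real j * (1 / real N) \<le> h" using j1 N by (simp add: field_simps)
    have jh2: "h \<le> real (Suc j) * (1 / real N)" using j2 N by (simp add: field_simps)
    have lo: "\<mu> (real j * (1 / real N)) \<le> \<mu> h" using jh1 by (intro mono) auto
    have hi: "\<mu> h \<le> \<mu> (real (Suc j) * (1 / real N))" using jh2 h by (intro mono) auto
    have lo': "real j * (\<mu> 1 / real N) \<le> \<mu> h" using lo mult[of "1 / real N" j] unit by simp
    have hi': "\<mu> h \<le> real (Suc j) * (\<mu> 1 / real N)" using hi mult[of "1 / real N" "Suc j"] unit by simp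
    have "real j * (\<mu> 1 / real N) \<le> h * \<mu> 1"
      using mult_right_mono[OF jh1 m1] by simp
    moreover have "h * \<mu> 1 \<le> real (Suc j) * (\<mu> 1 / real N)"
      using mult_right_mono[OF jh2 m1] by simp
    moreover have "real (Suc j) * (\<mu> 1 / real N) - real j * (\<mu> 1 / real N) = \<mu> 1 / real N"
      by (simp add: algebra_simps add_divide_distrib)
    ultimately show ?thesis using lo' hi' by linarith
  qed
  show ?thesis
  proof (rule ccontr)
    assume ne: "\<mu> h \<noteq> h * \<mu> 1"
    define d where "d = \<bar>\<mu> h - h * \<mu> 1\<bar>"
    have d: "0 < d" using ne by (simp add: d_def)
    obtain N :: nat where N: "\<mu> 1 / d < real N" using reals_Archimedean2 by blast
    have Np: "0 < N" proof (rule ccontr) assume "\<not> 0 < N" then have "N = 0" by simp then have "\<mu> 1 / d < 0" using N by simp moreover have "0 \<le> \<mu> 1 / d" using m1 d by simp ultimately show False by simp qed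
    have "d \<le> \<mu> 1 / real N" using bnd[OF Np] by (simp add: d_def)
    then have "d * real N \<le> \<mu> 1" using Np by (simp add: field_simps)
    moreover have "\<mu> 1 < d * real N" using N d by (simp add: field_simps)
    ultimately show False by simp
  qed
qed


definition prism :: "'a::euclidean_space \<Rightarrow> real \<Rightarrow> 'a set \<Rightarrow> 'a set" where
  "prism v h A = (\<lambda>p. fst p + snd p *\<^sub>R v) ` (A \<times> {0..h})"

lemma hvol_prism: "hvol v A = measure lebesgue (prism v 1 A)"
  unfolding hvol_def prism_def by (simp add: case_prod_beta')

lemma prism_iff: "x \<in> prism v h A \<longleftrightarrow> (\<exists>a\<in>A. \<exists>s. 0 \<le> s \<and> s \<le> h \<and> x = a + s *\<^sub>R v)"
  unfolding prism_def by force

lemma compact_prism: "compact A \<Longrightarrow> compact (prism v h A)"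
  unfolding prism_def by (intro compact_continuous_image continuous_intros compact_Times compact_Icc)

lemma prism_mono: "A \<subseteq> B \<Longrightarrow> h \<le> k \<Longrightarrow> prism v h A \<subseteq> prism v k B"
  unfolding prism_def by (intro image_mono Sigma_mono) auto

lemma measure_prism_mono:
  "compact A \<Longrightarrow> compact B \<Longrightarrow> A \<subseteq> B \<Longrightarrow> h \<le> k \<Longrightarrow> measure lebesgue (prism v h A) \<le> measure lebesgue (prism v k B)"
  by (intro measure_mono_fmeasurable prism_mono fmeasurableD lmeasurable_compact compact_prism)


lemma prism_add:
  fixes v :: "'a::euclidean_space"
  assumes v: "norm v = 1" and A: "compact A" "A \<subseteq> {x. v\<bullet>x = t}" and h: "0 \<le> h" and k: "0 \<le> k"
  shows "measure lebesgue (prism v (h+k) A) = measure lebesgue (prism v h A) + measure lebesgue (prism v k A)"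
proof -
  have vv: "v \<bullet> v = 1" using v by (simp add: dot_square_norm)
  have vx: "v \<bullet> (a + s *\<^sub>R v) = t + s" if "a \<in> A" for a s
    using that A(2) vv by (auto simp: inner_simps)
  have U: "prism v h A \<union> ((+) (h *\<^sub>R v) ` prism v k A) = prism v (h+k) A"
  proof
    show "prism v h A \<union> (+) (h *\<^sub>R v) ` prism v k A \<subseteq> prism v (h + k) A"
    proof
      fix x assume "x \<in> prism v h A \<union> (+) (h *\<^sub>R v) ` prism v k A"
      then show "x \<in> prism v (h + k) A"
      proof
        assume "x \<in> prism v h A"
        then show ?thesis using prism_mono[of A A h "h+k" v] k by auto
      next
        assume "x \<in> (+) (h *\<^sub>R v) ` prism v k A"
        then obtain y where y: "y \<in> prism v k A" "x = h *\<^sub>R v + y" by blast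
        then obtain a s where a: "a \<in> A" "0 \<le> s" "s \<le> k" "x = h *\<^sub>R v + (a + s *\<^sub>R v)"
          unfolding prism_iff by auto
        have "x = a + (h + s) *\<^sub>R v" using a(4) by (simp add: algebra_simps)
        then show ?thesis unfolding prism_iff using a h by (intro bexI[OF _ a(1)] exI[of _ "h + s"]) auto
      qed
    qed
    show "prism v (h + k) A \<subseteq> prism v h A \<union> (+) (h *\<^sub>R v) ` prism v k A"
    proof
      fix x assume "x \<in> prism v (h + k) A"
      then obtain a s where a: "a \<in> A" "0 \<le> s" "s \<le> h + k" "x = a + s *\<^sub>R v"
        unfolding prism_iff by auto
      show "x \<in> prism v h A \<union> (+) (h *\<^sub>R v) ` prism v k A"
      proof (cases "s \<le> h")
        case True
        then have "x \<in> prism v h A" unfolding prism_iff using a by blast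
        then show ?thesis by blast
      next
        case False
        have "a + (s - h) *\<^sub>R v \<in> prism v k A" unfolding prism_iff using a False by (intro bexI[OF _ a(1)] exI[of _ "s - h"]) auto
        moreover have "x = h *\<^sub>R v + (a + (s - h) *\<^sub>R v)" using a(4) by (simp add: algebra_simps)
        ultimately show ?thesis by blast
      qed
    qed
  qed
  have N: "negligible (prism v h A \<inter> ((+) (h *\<^sub>R v) ` prism v k A))"
  proof (rule negligible_subset[OF negligible_hyperplane[of v "t + h"]])
    show "v \<noteq> 0 \<or> t + h \<noteq> 0" using v by auto
    show "prism v h A \<inter> (+) (h *\<^sub>R v) ` prism v k A \<subseteq> {x. v \<bullet> x = t + h}"
    proof
      fix x assume x: "x \<in> prism v h A \<inter> (+) (h *\<^sub>R v) ` prism v k A"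
      then have "x \<in> prism v h A" by blast
      then obtain a s where a: "a \<in> A" "0 \<le> s" "s \<le> h" "x = a + s *\<^sub>R v"
        unfolding prism_iff by auto
      obtain y where y: "y \<in> prism v k A" "x = h *\<^sub>R v + y" using x by blast
      then obtain b s' where b: "b \<in> A" "0 \<le> s'" "s' \<le> k" "x = h *\<^sub>R v + (b + s' *\<^sub>R v)"
        unfolding prism_iff by auto
      have "x = b + (h + s') *\<^sub>R v" using b(4) by (simp add: algebra_simps)
      then have "v \<bullet> x = t + (h + s')" using vx[OF b(1)] by simp
      moreover have "v \<bullet> x = t + s" using vx[OF a(1)] a(4) by simp
      ultimately show "x \<in> {x. v \<bullet> x = t + h}" using a b by auto
    qed
  qed
  show ?thesis
    using measure_translate_add[OF lmeasurable_compact[OF compact_prism[OF A(1)]]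
        lmeasurable_compact[OF compact_prism[OF A(1)]] U N] by simp
qed

lemma measure_prism:
  fixes v :: "'a::euclidean_space"
  assumes v: "norm v = 1" and A: "compact A" "A \<subseteq> {x. v\<bullet>x = t}" and h: "0 \<le> h"
  shows "measure lebesgue (prism v h A) = h * hvol v A"
  unfolding hvol_prism
  by (rule additive_mono_linear[of "\<lambda>h. measure lebesgue (prism v h A)", OF prism_add[OF v A] _ h])
     (auto intro!: measure_prism_mono A)

lemma msum_prism:
  assumes l: "0 \<le> l" "l \<le> 1"
  shows "msum l (prism v h A) (prism v k B) \<subseteq> prism v (l*h + (1-l)*k) (msum l A B)"
proof
  fix x assume "x \<in> msum l (prism v h A) (prism v k B)"
  then obtain y z where y: "y \<in> prism v h A" and z: "z \<in> prism v k B" and x: "x = l *\<^sub>R y + (1-l) *\<^sub>R z"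
    unfolding msum_iff by blast
  obtain a s where a: "a \<in> A" "0 \<le> s" "s \<le> h" "y = a + s *\<^sub>R v" using y unfolding prism_iff by blast
  obtain b s' where b: "b \<in> B" "0 \<le> s'" "s' \<le> k" "z = b + s' *\<^sub>R v" using z unfolding prism_iff by blast
  have "x = (l *\<^sub>R a + (1-l) *\<^sub>R b) + (l * s + (1-l) * s') *\<^sub>R v"
    by (simp add: x a(4) b(4) algebra_simps)
  moreover have "l *\<^sub>R a + (1-l) *\<^sub>R b \<in> msum l A B" using a b by (auto simp: msum_iff)
  moreover have "0 \<le> l * s + (1-l) * s'" using l a b by simp
  moreover have "l * s + (1-l) * s' \<le> l * h + (1-l) * k"
    using l a b by (intro add_mono mult_left_mono) auto
  ultimately show "x \<in> prism v (l*h + (1-l)*k) (msum l A B)" unfolding prism_iff by blast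
qed


lemma hvol_nonneg: "0 \<le> hvol v A"
  by (simp add: hvol_def measure_nonneg)

lemma powr_aux1:
  fixes a m :: real assumes "0 \<le> a" "0 < m"
  shows "(a powr (1/m) * a) powr (1/(m+1)) = a powr (1/m)"
proof (cases "a = 0")
  case True then show ?thesis by simp
next
  case False
  then have a: "0 < a" using assms by simp
  have "a powr (1/m) * a = a powr (1/m + 1)" using a by (simp add: powr_add)
  then have "(a powr (1/m) * a) powr (1/(m+1)) = a powr ((1/m + 1) * (1/(m+1)))"
    by (simp add: powr_powr)
  also have "(1/m + 1) * (1/(m+1)) = 1/m" using assms by (simp add: field_simps)
  finally show ?thesis .
qed

lemma powr_aux2:
  fixes s :: real assumes "0 \<le> s" "0 < m"
  shows "(s ^ m) powr (1 / real m) = s"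
proof (cases "s = 0")
  case True then show ?thesis using assms by simp
next
  case False
  then have s: "0 < s" using assms by simp
  have "(s ^ m) powr (1 / real m) = (s powr real m) powr (1 / real m)" using s by (simp add: powr_realpow)
  also have "\<dots> = s" using s assms by (simp add: powr_powr)
  finally show ?thesis .
qed

lemma section_bm:
  fixes v :: "'a::euclidean_space"
  assumes v: "norm v = 1" and n2: "2 \<le> DIM('a)"
    and A: "compact A" "A \<noteq> {}" "A \<subseteq> {x. v\<bullet>x = tA}"
    and B: "compact B" "B \<noteq> {}" "B \<subseteq> {x. v\<bullet>x = tB}"
    and Z: "compact Z" "Z \<subseteq> {x. v\<bullet>x = tZ}" "msum l A B \<subseteq> Z"
    and l: "0 < l" "l < 1"
  shows "l * hvol v A powr (1 / (real DIM('a) - 1)) + (1-l) * hvol v B powr (1 / (real DIM('a) - 1))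
      \<le> hvol v Z powr (1 / (real DIM('a) - 1))"
proof -
  define m where "m = DIM('a) - 1"
  have m: "0 < m" "DIM('a) = Suc m" using n2 by (auto simp: m_def)
  have mr: "real DIM('a) - 1 = real m" using m by simp
  define a where "a = hvol v A"
  define b where "b = hvol v B"
  have a0: "0 \<le> a" and b0: "0 \<le> b" by (auto simp: a_def b_def hvol_nonneg)
  define h where "h = a powr (1 / real m)"
  define k where "k = b powr (1 / real m)"
  have h0: "0 \<le> h" and k0: "0 \<le> k" by (auto simp: h_def k_def)
  define s where "s = l * h + (1-l) * k"
  have s0: "0 \<le> s" using h0 k0 l by (simp add: s_def)
  define X where "X = prism v h A"
  define Y where "Y = prism v k B"
  have cX: "compact X" and cY: "compact Y" by (auto simp: X_def Y_def intro!: compact_prism A B)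
  have neX: "X \<noteq> {}" using A(2) h0 unfolding X_def prism_def by auto
  have neY: "Y \<noteq> {}" using B(2) k0 unfolding Y_def prism_def by auto
  have mX: "measure lebesgue X = h * a" unfolding X_def a_def by (rule measure_prism[OF v A(1,3) h0])
  have mY: "measure lebesgue Y = k * b" unfolding Y_def b_def by (rule measure_prism[OF v B(1,3) k0])
  have rX: "measure lebesgue X powr (1 / real DIM('a)) = h"
    unfolding mX h_def using powr_aux1[OF a0, of "real m"] m by (simp add: add.commute)
  have rY: "measure lebesgue Y powr (1 / real DIM('a)) = k"
    unfolding mY k_def using powr_aux1[OF b0, of "real m"] m by (simp add: add.commute)
  have "s ^ DIM('a) \<le> measure lebesgue (msum l X Y)"
    using bm_add[OF cX neX cY neY l] by (simp add: rX rY s_def)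
  also have "\<dots> \<le> measure lebesgue (prism v s Z)"
  proof (intro measure_mono_fmeasurable fmeasurableD lmeasurable_compact compact_msum cX cY compact_prism Z(1))
    have "msum l X Y \<subseteq> prism v s (msum l A B)"
      unfolding X_def Y_def s_def using l by (intro msum_prism) auto
    also have "\<dots> \<subseteq> prism v s Z" by (rule prism_mono[OF Z(3)]) simp
    finally show "msum l X Y \<subseteq> prism v s Z" .
  qed
  also have "\<dots> = s * hvol v Z" by (rule measure_prism[OF v Z(1,2) s0])
  finally have ineq: "s * s ^ m \<le> s * hvol v Z" using m by simp
  have "s \<le> hvol v Z powr (1 / real m)"
  proof (cases "s = 0")
    case True then show ?thesis by simp
  next
    case False
    then have sp: "0 < s" using s0 by simp
    then have "s ^ m \<le> hvol v Z" using ineq by simp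
    then have "(s ^ m) powr (1 / real m) \<le> hvol v Z powr (1 / real m)"
      using s0 by (intro powr_mono2) auto
    then show ?thesis using powr_aux2[OF s0 m(1)] by simp
  qed
  then show ?thesis by (simp add: mr s_def h_def k_def a_def b_def)
qed

lemma kernel_closed_seg:
  assumes "k \<in> kernel S" "s \<in> S" "0 \<le> a" "a \<le> 1"
  shows "a *\<^sub>R k + (1-a) *\<^sub>R s \<in> S"
proof -
  have "a *\<^sub>R k + (1-a) *\<^sub>R s \<in> closed_segment k s"
    unfolding in_segment using assms by (intro exI[of _ "1-a"]) auto
  then show ?thesis using assms(1,2) unfolding kernel_def by blast
qed

lemma kernel_subset: "kernel S \<subseteq> S"
  unfolding kernel_def by auto

lemma compact_kernel:
  fixes S :: "'a::euclidean_space set"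
  assumes S: "compact S" shows "compact (kernel S)"
proof -
  have cS: "closed S" using S by (rule compact_imp_closed)
  have "closure (kernel S) \<subseteq> kernel S"
  proof
    fix x assume x: "x \<in> closure (kernel S)"
    have xS: "x \<in> S" using x closure_mono[OF kernel_subset[of S]] cS closure_closed by blast
    have "closed_segment x y \<subseteq> S" if y: "y \<in> S" for y
    proof
      fix w assume "w \<in> closed_segment x y"
      then obtain u where u: "0 \<le> u" "u \<le> 1" "w = (1 - u) *\<^sub>R x + u *\<^sub>R y" unfolding in_segment by blast
      define f where "f = (\<lambda>z. (1 - u) *\<^sub>R z + u *\<^sub>R y)"
      have "f ` kernel S \<subseteq> S"
      proof
        fix q assume "q \<in> f ` kernel S"
        then obtain k where k: "k \<in> kernel S" "q = f k" by blast
        have "q \<in> closed_segment k y" unfolding k(2) f_def in_segment using u by blast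
        then show "q \<in> S" using k(1) y unfolding kernel_def by blast
      qed
      then have "f ` closure (kernel S) \<subseteq> S"
        by (intro image_closure_subset cS) (auto simp: f_def intro!: continuous_intros)
      then show "w \<in> S" using x u by (auto simp: f_def)
    qed
    then show "x \<in> kernel S" using xS unfolding kernel_def by blast
  qed
  then have "closed (kernel S)" by (simp add: closure_subset_eq)
  then show ?thesis using S kernel_subset by (metis compact_Int_closed inf.absorb_iff2)
qed

lemma compact_sec:
  fixes X :: "'a::euclidean_space set"
  shows "compact X \<Longrightarrow> compact ({x. v\<bullet>x = t} \<inter> X)"
  using compact_Int_closed[of X "{x. v\<bullet>x = t}"] closed_hyperplane[of v t] by (simp add: Int_commute)

lemma hvol_empty: "hvol v {} = 0"
  by (simp add: hvol_def)

lemma supp_sec_nonempty: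
  fixes X :: "'a::euclidean_space set"
  assumes X: "compact X" and t: "t \<in> supp (section_fun v X)"
  shows "{x. v\<bullet>x = t} \<inter> X \<noteq> {}"
proof -
  have "{t. section_fun v X t \<noteq> 0} \<subseteq> (\<lambda>k. v\<bullet>k) ` X"
  proof
    fix t assume "t \<in> {t. section_fun v X t \<noteq> 0}"
    then have "{x. v\<bullet>x = t} \<inter> X \<noteq> {}" by (auto simp: section_fun_def hvol_empty)
    then show "t \<in> (\<lambda>k. v\<bullet>k) ` X" by auto
  qed
  moreover have "closed ((\<lambda>k. v\<bullet>k) ` X)"
    by (intro compact_imp_closed compact_continuous_image continuous_intros X)
  ultimately have "supp (section_fun v X) \<subseteq> (\<lambda>k. v\<bullet>k) ` X"
    unfolding supp_def by (rule closure_minimal)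
  then show ?thesis using t by auto
qed

lemma hvol_mono:
  fixes A B :: "'a::euclidean_space set"
  shows "compact A \<Longrightarrow> compact B \<Longrightarrow> A \<subseteq> B \<Longrightarrow> hvol v A \<le> hvol v B"
  unfolding hvol_prism by (intro measure_prism_mono) auto

theorem lemma5p1:
  fixes S :: "(real ^ 'n) set" and v :: "real ^ 'n"
  assumes "CARD('n) \<ge> 2"
    and "star_body S"
    and "norm v = 1"
  shows "(\<forall>x \<in> supp (section_fun v (kernel S)). \<forall>y \<in> supp (section_fun v S).
            \<forall>\<alpha> \<in> {0..1::real}.
              section_fun v S (\<alpha> * x + (1 - \<alpha>) * y) powr (1 / (real CARD('n) - 1))
              \<ge> \<alpha> * section_fun v (kernel S) x powr (1 / (real CARD('n) - 1))
                + (1 - \<alpha>) * section_fun v S y powr (1 / (real CARD('n) - 1)))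
       \<and> (\<forall>x y :: real. \<forall>\<alpha> \<in> {0..1::real}.
              section_fun v S (\<alpha> * x + (1 - \<alpha>) * y)
              \<ge> mpow (section_fun v (kernel S) x) \<alpha> * mpow (section_fun v S y) (1 - \<alpha>))"
proof -
  note n2 = assms(1) and v = assms(3)
  have cS: "compact S" using assms(2) by (simp add: star_body_def compact_body_def)
  define K where "K = kernel S"
  have cK: "compact K" unfolding K_def by (rule compact_kernel[OF cS])
  have KS: "K \<subseteq> S" unfolding K_def by (rule kernel_subset)
  define e where "e = 1 / (real CARD('n) - 1)"
  have e0: "0 < e" using n2 by (simp add: e_def)
  define fS where "fS = section_fun v S"
  define fK where "fK = section_fun v K"
  have fS: "fS t = hvol v ({x. v\<bullet>x = t} \<inter> S)" for t by (simp add: fS_def section_fun_def)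
  have fK: "fK t = hvol v ({x. v\<bullet>x = t} \<inter> K)" for t by (simp add: fK_def section_fun_def)
  have fS0: "0 \<le> fS t" for t by (simp add: fS hvol_nonneg)
  have fK0: "0 \<le> fK t" for t by (simp add: fK hvol_nonneg)
  have KleS: "fK t \<le> fS t" for t
    unfolding fS fK using KS by (intro hvol_mono compact_sec cS cK) auto
  have P1: "\<alpha> * fK x powr e + (1 - \<alpha>) * fS y powr e \<le> fS (\<alpha> * x + (1 - \<alpha>) * y) powr e"
    if x: "x \<in> supp fK" and y: "y \<in> supp fS" and a: "0 \<le> \<alpha>" "\<alpha> \<le> 1" for x y \<alpha>
  proof -
    consider "\<alpha> = 0" | "\<alpha> = 1" | "0 < \<alpha>" "\<alpha> < 1" using a by linarith
    then show ?thesis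
    proof cases
      case 1 then show ?thesis by simp
    next
      case 2
      then show ?thesis using KleS[of x] fK0[of x] e0 by (simp add: powr_mono2)
    next
      case 3
      define z where "z = \<alpha> * x + (1 - \<alpha>) * y"
      have "\<alpha> * hvol v ({p. v\<bullet>p = x} \<inter> K) powr (1 / (real DIM(real^'n) - 1))
          + (1 - \<alpha>) * hvol v ({p. v\<bullet>p = y} \<inter> S) powr (1 / (real DIM(real^'n) - 1))
          \<le> hvol v ({p. v\<bullet>p = z} \<inter> S) powr (1 / (real DIM(real^'n) - 1))"
      proof (rule section_bm[OF v])
        show "2 \<le> DIM(real^'n)" using n2 by simp
        show "compact ({p. v\<bullet>p = x} \<inter> K)" "compact ({p. v\<bullet>p = y} \<inter> S)" "compact ({p. v\<bullet>p = z} \<inter> S)"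
          by (intro compact_sec cK cS)+
        show "{p. v\<bullet>p = x} \<inter> K \<noteq> {}" using supp_sec_nonempty[OF cK] x by (simp add: fK_def)
        show "{p. v\<bullet>p = y} \<inter> S \<noteq> {}" using supp_sec_nonempty[OF cS] y by (simp add: fS_def)
        show "{p. v\<bullet>p = x} \<inter> K \<subseteq> {p. v\<bullet>p = x}" "{p. v\<bullet>p = y} \<inter> S \<subseteq> {p. v\<bullet>p = y}"
          "{p. v\<bullet>p = z} \<inter> S \<subseteq> {p. v\<bullet>p = z}" by auto
        show "msum \<alpha> ({p. v\<bullet>p = x} \<inter> K) ({p. v\<bullet>p = y} \<inter> S) \<subseteq> {p. v\<bullet>p = z} \<inter> S"
        proof
          fix w assume "w \<in> msum \<alpha> ({p. v\<bullet>p = x} \<inter> K) ({p. v\<bullet>p = y} \<inter> S)"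
          then obtain p q where p: "v\<bullet>p = x" "p \<in> K" and q: "v\<bullet>q = y" "q \<in> S"
            and w: "w = \<alpha> *\<^sub>R p + (1-\<alpha>) *\<^sub>R q" unfolding msum_iff by blast
          have "w \<in> S" unfolding w using kernel_closed_seg[of p S q \<alpha>] p q a by (simp add: K_def)
          moreover have "v\<bullet>w = z" by (simp add: w z_def inner_simps p q)
          ultimately show "w \<in> {p. v\<bullet>p = z} \<inter> S" by simp
        qed
      qed (use 3 in auto)
      then show ?thesis by (simp add: fS fK e_def z_def)
    qed
  qed
  have P2: "mpow (fK x) \<alpha> * mpow (fS y) (1 - \<alpha>) \<le> fS (\<alpha> * x + (1 - \<alpha>) * y)"
    if a: "0 \<le> \<alpha>" "\<alpha> \<le> 1" for x y \<alpha>
  proof -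
    consider "\<alpha> = 0" | "\<alpha> = 1" | "0 < \<alpha>" "\<alpha> < 1" using a by linarith
    then show ?thesis
    proof cases
      case 1 then show ?thesis using fS0[of y] by (simp add: mpow_def)
    next
      case 2 then show ?thesis using fK0[of x] KleS[of x] by (simp add: mpow_def)
    next
      case 3
      define z where "z = \<alpha> * x + (1 - \<alpha>) * y"
      have mp: "mpow (fK x) \<alpha> * mpow (fS y) (1 - \<alpha>) = fK x powr \<alpha> * fS y powr (1 - \<alpha>)"
        using 3 by (simp add: mpow_def)
      show ?thesis
      proof (cases "fK x = 0 \<or> fS y = 0")
        case True
        then show ?thesis unfolding mp using 3 fS0 by auto
      next
        case False
        then have ap: "0 < fK x" and bp: "0 < fS y" using fK0[of x] fS0[of y] by auto
        have "x \<in> {t. fK t \<noteq> 0}" using False by simp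
        then have xs: "x \<in> supp fK" using closure_subset[of "{t. fK t \<noteq> 0}"] unfolding supp_def by blast
        have "y \<in> {t. fS t \<noteq> 0}" using False by simp
        then have ys: "y \<in> supp fS" using closure_subset[of "{t. fS t \<noteq> 0}"] unfolding supp_def by blast
        have h1: "\<alpha> * fK x powr e + (1 - \<alpha>) * fS y powr e \<le> fS z powr e"
          using P1[OF xs ys a] by (simp add: z_def)
        have "(fK x powr e) powr \<alpha> * (fS y powr e) powr (1 - \<alpha>) \<le> \<alpha> * fK x powr e + (1 - \<alpha>) * fS y powr e"
          using 3 ap bp by (intro Youngs_inequality_0) auto
        moreover have "(fK x powr e) powr \<alpha> * (fS y powr e) powr (1 - \<alpha>) = (fK x powr \<alpha> * fS y powr (1 - \<alpha>)) powr e"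
          by (simp add: powr_powr powr_mult mult.commute)
        ultimately have h2: "(fK x powr \<alpha> * fS y powr (1 - \<alpha>)) powr e \<le> fS z powr e"
          using h1 by linarith
        define m where "m = real CARD('n) - 1"
        have em: "e * m = 1" using n2 by (simp add: e_def m_def)
        have m0: "0 \<le> m" using n2 by (simp add: m_def)
        have "((fK x powr \<alpha> * fS y powr (1 - \<alpha>)) powr e) powr m \<le> (fS z powr e) powr m"
          by (rule powr_mono2[OF m0 _ h2]) simp
        then show ?thesis unfolding mp using em fS0[of z]
          by (simp add: powr_powr z_def)
      qed
    qed
  qed
  show ?thesis
    using P1 P2 by (auto simp: fS_def fK_def K_def e_def)
qed

end
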